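(* Let $(\mathcal{A},\varphi)$ be a $C^*$-probability space and let $(a_i)_{i=1}^\infty$ be a family of elements of $\mathcal{A}$ which is V-monotonically independent with respect to $\varphi$ (index set $I=\mathbb{N}_+$ with its natural order), identically distributed (i.e. $\varphi(a_i^k)$ does not depend on $i$ for every $k\in\mathbb{N}$), with $\varphi(a_i)=0$ and $\varphi(a_i^2)=1$. Let $S_N=\frac{1}{\sqrt N}\sum_{i=1}^N a_i$. Then for every $n\in\mathbb{N}$, $$\lim_{N\to\infty}\varphi(S_N^n)=\begin{cases}\dfrac{|\mathcal{OV}^2(2k)|}{k!} & \text{if } n=2k,\\ 0 & \text{if } n \text{ is odd.}\end{cases}$$
   Context: For $1\le m\le n$ let $I_{n,m}=\{(i_1,\dots,i_n)\in I^n: i_1>\dots>i_m<\dots<i_n\}$ (strict inequalities; $I_{1,1}=I$) and $I_n=\bigcup_{m=1}^n I_{n,m}$. A family $(\mathcal{A}_i)_{i\in I}$ of subalgebras of a unital algebra $\mathcal{A}$ with state $\varphi$ ($\varphi(\mathbf 1)=1$), where each $\mathcal{A}_i$ has an inner unit $\mathbf 1_i$ ($\mathbf 1_i a=a\mathbf 1_i=a$ for $a\in\mathcal{A}_i$), is V-monotonically independent with respect to $\varphi$ if $\varphi(\mathbf 1_i)=1$ for all $i$ and for every $(i_1,\dots,i_n)\in I^n$ with $i_k\ne i_{k+1}$ for all $k$ and all $a_k\in\mathcal{A}_{i_k}$: (i) if $\varphi(a_1)=\dots=\varphi(a_n)=0$ then $\varphi(a_1\cdots a_n)=0$; (ii)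 letting $r$ be the largest index with $(i_1,\dots,i_r)\in I_r$, for every $j\in[n]$ with $\varphi(a_1)=\dots=\varphi(a_{j-1})=0$ one has $\varphi(a_1\cdots a_{j-1}\mathbf 1_{i_j}a_{j+1}\cdots a_n)=\varphi(a_1\cdots a_{j-1}a_{j+1}\cdots a_n)$ if $j\le r$ and $=0$ if $j>r$. A family of elements $(a_i)$ is V-monotonically independent if the algebras generated by $a_i$ and $\mathbf 1_i$ (for given inner units $\mathbf 1_i$) are. A $C^*$-probability space is a unital $C^*$-algebra with a state. For a non-crossing partition $\pi$ of $[n]$ and blocks $B,B'\in\pi$, write $B'<B$ if there are two consecutive elements $p<p'$ of $B'$ (no element of $B'$ between them) such that $p<k<p'$ for all $k\in B$; $B'$ is the nearest outer block of $B$ if $B'<B$ and there is no $B''$ with $B'<B''<B$. A labeling $\mathfrak i:\pi\to I$ is V-monotone if for every sequence of blocks $B_1,\dots,B_r$ ($r\ge1$) such that $B_{k+1}$ is the nearest outer block of $B_k$ for each $k<r$, we have $(\mathfrak i(B_1),\dots,\mathfrak i(B_r))\in I_r$. $\mathcal{OV}^2(2k)$ denotes the set of pairs $(\pi,\mathfrak i)$ where $\pi$ is a non-crossing pair partition of $[2k]$ (all blocks of size 2) and $\mathfrak i:\pi\to[k]$ is a bijection which is a V-monotone labeling (with $I=\mathbb{N}_+$). *)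

theory Defs
  imports "HOL-Analysis.Analysis" "HOL-Library.Disjoint_Sets" "HOL-Library.FuncSet"
begin

text \<open>A unital complex C*-algebra is modelled on a real Banach algebra type with unit
  together with a complex scalar multiplication extending the real one and an involution.\<close>

definition cstar_algebra :: "(complex \<Rightarrow> 'a::{real_normed_algebra_1,banach} \<Rightarrow> 'a) \<Rightarrow> ('a \<Rightarrow> 'a) \<Rightarrow> bool"
  where "cstar_algebra smul star \<longleftrightarrow>
    (\<forall>r x. smul (complex_of_real r) x = scaleR r x) \<and>
    (\<forall>c x y. smul c (x + y) = smul c x + smul c y) \<and>
    (\<forall>c d x. smul (c + d) x = smul c x + smul d x) \<and>
    (\<forall>c d x. smul c (smul d x) = smul (c * d) x) \<and>
    (\<forall>c x y. smul c (x * y) = smul c x * y \<and> smul c (x * y) = x * smul c y) \<and>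
    (\<forall>c x. norm (smul c x) = cmod c * norm x) \<and>
    (\<forall>x. star (star x) = x) \<and>
    (\<forall>x y. star (x + y) = star x + star y) \<and>
    (\<forall>c x. star (smul c x) = smul (cnj c) (star x)) \<and>
    (\<forall>x y. star (x * y) = star y * star x) \<and>
    (\<forall>x. norm (star x * x) = (norm x)\<^sup>2)"

definition is_state :: "(complex \<Rightarrow> 'a \<Rightarrow> 'a) \<Rightarrow> ('a \<Rightarrow> 'a) \<Rightarrow> ('a::ring_1 \<Rightarrow> complex) \<Rightarrow> bool"
  where "is_state smul star \<phi> \<longleftrightarrow>
    (\<forall>x y. \<phi> (x + y) = \<phi> x + \<phi> y) \<and>
    (\<forall>c x. \<phi> (smul c x) = c * \<phi> x) \<and>
    (\<forall>x. Im (\<phi> (star x * x)) = 0 \<and> Re (\<phi> (star x * x)) \<ge> 0) \<and>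
    \<phi> 1 = 1"

definition cstar_prob_space :: "(complex \<Rightarrow> 'a \<Rightarrow> 'a) \<Rightarrow> ('a \<Rightarrow> 'a) \<Rightarrow> ('a::{real_normed_algebra_1,banach} \<Rightarrow> complex) \<Rightarrow> bool"
  where "cstar_prob_space smul star \<phi> \<longleftrightarrow> cstar_algebra smul star \<and> is_state smul star \<phi>"

inductive_set gen_alg :: "(complex \<Rightarrow> 'a \<Rightarrow> 'a) \<Rightarrow> 'a::ring set \<Rightarrow> 'a set"
  for smul :: "complex \<Rightarrow> 'a \<Rightarrow> 'a" and S :: "'a set" where
  gen_base: "x \<in> S \<Longrightarrow> x \<in> gen_alg smul S"
| gen_add: "x \<in> gen_alg smul S \<Longrightarrow> y \<in> gen_alg smul S \<Longrightarrow> x + y \<in> gen_alg smul S"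
| gen_smul: "x \<in> gen_alg smul S \<Longrightarrow> smul c x \<in> gen_alg smul S"
| gen_mult: "x \<in> gen_alg smul S \<Longrightarrow> y \<in> gen_alg smul S \<Longrightarrow> x * y \<in> gen_alg smul S"

text \<open>vseq xs: xs \<in> I_n with n = length xs, i.e. xs = (i_1,...,i_n) with
  i_1 > ... > i_m < ... < i_n for some 1 \<le> m \<le> n.\<close>

definition vseq :: "nat list \<Rightarrow> bool"
  where "vseq xs \<longleftrightarrow> xs \<noteq> [] \<and>
    (\<exists>m. 1 \<le> m \<and> m \<le> length xs \<and> sorted_wrt (>) (take m xs) \<and> sorted_wrt (<) (drop (m - 1) xs))"

text \<open>Family of subsets A i (i \<in> I) of the algebra with inner units u i.
  Lists are 0-indexed, so the paper's index j \<le> r becomes j < r.\<close>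

definition vmono_indep :: "('a::ring_1 \<Rightarrow> complex) \<Rightarrow> nat set \<Rightarrow> (nat \<Rightarrow> 'a set) \<Rightarrow> (nat \<Rightarrow> 'a) \<Rightarrow> bool"
  where "vmono_indep \<phi> I A u \<longleftrightarrow>
    (\<forall>i\<in>I. u i \<in> A i \<and> (\<forall>a\<in>A i. u i * a = a \<and> a * u i = a) \<and> \<phi> (u i) = 1) \<and>
    (\<forall>is as. is \<noteq> [] \<and> set is \<subseteq> I \<and> length as = length is \<and>
        (\<forall>k. Suc k < length is \<longrightarrow> is ! k \<noteq> is ! Suc k) \<and>
        (\<forall>k < length is. as ! k \<in> A (is ! k)) \<longrightarrow>
      ((\<forall>k < length as. \<phi> (as ! k) = 0) \<longrightarrow> \<phi> (prod_list as) = 0) \<and>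
      (let r = (GREATEST r. r \<le> length is \<and> vseq (take r is)) in
        \<forall>j < length is. (\<forall>k < j. \<phi> (as ! k) = 0) \<longrightarrow>
          \<phi> (prod_list (as[j := u (is ! j)])) =
            (if j < r then \<phi> (prod_list (take j as @ drop (Suc j) as)) else 0)))"

definition noncrossing :: "nat set set \<Rightarrow> bool"
  where "noncrossing \<pi> \<longleftrightarrow> (\<forall>B\<in>\<pi>. \<forall>B'\<in>\<pi>. B \<noteq> B' \<longrightarrow>
     \<not> (\<exists>a b c d. a < b \<and> b < c \<and> c < d \<and> a \<in> B \<and> c \<in> B \<and> b \<in> B' \<and> d \<in> B'))"

definition block_lt :: "nat set \<Rightarrow> nat set \<Rightarrow> bool"
  where "block_lt B' B \<longleftrightarrow> (\<exists>p p'. p \<in> B' \<and> p' \<in> B' \<and> p < p' \<and>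
     (\<forall>q\<in>B'. \<not> (p < q \<and> q < p')) \<and> (\<forall>k\<in>B. p < k \<and> k < p'))"

definition nearest_outer :: "nat set set \<Rightarrow> nat set \<Rightarrow> nat set \<Rightarrow> bool"
  where "nearest_outer \<pi> B' B \<longleftrightarrow> block_lt B' B \<and>
     \<not> (\<exists>B''\<in>\<pi>. block_lt B' B'' \<and> block_lt B'' B)"

definition vmono_labeling :: "nat set set \<Rightarrow> (nat set \<Rightarrow> nat) \<Rightarrow> bool"
  where "vmono_labeling \<pi> f \<longleftrightarrow> (\<forall>Bs. Bs \<noteq> [] \<and> set Bs \<subseteq> \<pi> \<and>
     (\<forall>k. Suc k < length Bs \<longrightarrow> nearest_outer \<pi> (Bs ! Suc k) (Bs ! k)) \<longrightarrow> vseq (map f Bs))"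

definition OV2 :: "nat \<Rightarrow> (nat set set \<times> (nat set \<Rightarrow> nat)) set"
  where "OV2 k = {(\<pi>, f). partition_on {1..2*k} \<pi> \<and> (\<forall>B\<in>\<pi>. card B = 2) \<and> noncrossing \<pi> \<and>
     f \<in> extensional \<pi> \<and> bij_betw f \<pi> {1..k} \<and> vmono_labeling \<pi> f}"

end

theory Submission
  imports Defs "HOL-Computational_Algebra.Polynomial"
begin


locale vsetup =
  fixes smul :: "complex \<Rightarrow> 'a::{real_normed_algebra_1,banach} \<Rightarrow> 'a"
    and star :: "'a \<Rightarrow> 'a"
    and \<phi> :: "'a \<Rightarrow> complex"
    and a u :: "nat \<Rightarrow> 'a"
  assumes cs: "cstar_prob_space smul star \<phi>"
    and vi: "vmono_indep \<phi> {1..} (\<lambda>i. gen_alg smul {a i, u i}) u"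
    and idd: "\<forall>i\<ge>1. \<forall>j\<ge>1. \<forall>k::nat. \<phi> (a i ^ k) = \<phi> (a j ^ k)"
    and m12: "\<forall>i\<ge>1. \<phi> (a i) = 0 \<and> \<phi> (a i ^ 2) = 1"
begin

lemma CA: "cstar_algebra smul star" using cs unfolding cstar_prob_space_def by (elim conjE)
lemma ST: "is_state smul star \<phi>" using cs unfolding cstar_prob_space_def by (elim conjE)

lemma smul_ofreal: "smul (complex_of_real r) x = scaleR r x"
  using CA unfolding cstar_algebra_def by (elim conjE allE) 
lemma smul_add: "smul c (x + y) = smul c x + smul c y"
  using CA unfolding cstar_algebra_def by (elim conjE allE)
lemma smul_add_left: "smul (c + d) x = smul c x + smul d x"
  using CA unfolding cstar_algebra_def by (elim conjE allE)
lemma smul_smul: "smul c (smul d x) = smul (c * d) x"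
  using CA unfolding cstar_algebra_def by (elim conjE allE)
lemma smul_multL: "smul c x * y = smul c (x * y)"
proof -
  have "\<forall>c x y. smul c (x * y) = smul c x * y \<and> smul c (x * y) = x * smul c y"
    using CA unfolding cstar_algebra_def by (elim conjE)
  then show ?thesis by metis
qed
lemma smul_multR: "x * smul c y = smul c (x * y)"
proof -
  have "\<forall>c x y. smul c (x * y) = smul c x * y \<and> smul c (x * y) = x * smul c y"
    using CA unfolding cstar_algebra_def by (elim conjE)
  then show ?thesis by metis
qed
lemma smul_0[simp]: "smul 0 x = 0"
  using smul_ofreal[of 0 x] by simp
lemma smul_1[simp]: "smul 1 x = x"
  using smul_ofreal[of 1 x] by simp
lemma smul_zero[simp]: "smul c 0 = 0"
  using smul_add[of c 0 0] by simp
lemma smul_neg1: "smul (-1) x = - x"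
  using smul_ofreal[of "-1" x] by simp
lemma smul_sum: "smul c (sum f A) = (\<Sum>x\<in>A. smul c (f x))"
  by (induction A rule: infinite_finite_induct) (auto simp: smul_add)

lemma phi_add: "\<phi> (x + y) = \<phi> x + \<phi> y"
  using ST unfolding is_state_def by (elim conjE allE)
lemma phi_smul: "\<phi> (smul c x) = c * \<phi> x"
  using ST unfolding is_state_def by (elim conjE allE)
lemma phi_one[simp]: "\<phi> 1 = 1"
  using ST unfolding is_state_def by (elim conjE allE)
lemma phi_zero[simp]: "\<phi> 0 = 0"
  using phi_add[of 0 0] by simp
lemma phi_sum: "\<phi> (sum f A) = (\<Sum>x\<in>A. \<phi> (f x))"
  by (induction A rule: infinite_finite_induct) (auto simp: phi_add)
lemma phi_scaleR: "\<phi> (scaleR r x) = complex_of_real r * \<phi> x"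
  using phi_smul[of "complex_of_real r" x] smul_ofreal by simp

lemma gen_alg_mem_a: "a i \<in> gen_alg smul {a i, u i}" by (auto intro: gen_base)
lemma gen_alg_mem_u: "u i \<in> gen_alg smul {a i, u i}" by (auto intro: gen_base)

lemma unit_props:
  assumes "i \<ge> 1" "x \<in> gen_alg smul {a i, u i}"
  shows "u i * x = x" "x * u i = x"
  using vi assms unfolding vmono_indep_def by auto

lemma phi_u: "i \<ge> 1 \<Longrightarrow> \<phi> (u i) = 1"
  using vi unfolding vmono_indep_def by auto

definition pw :: "nat \<Rightarrow> nat \<Rightarrow> 'a" where
  "pw i k = (if k = 0 then u i else a i ^ k)"

lemma ua: "i \<ge> 1 \<Longrightarrow> u i * a i = a i" "i \<ge> 1 \<Longrightarrow> a i * u i = a i" "i \<ge> 1 \<Longrightarrow> u i * u i = u i"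
  using unit_props gen_alg_mem_a gen_alg_mem_u by auto

lemma pw_Suc: "i \<ge> 1 \<Longrightarrow> pw i (Suc k) = a i * pw i k"
  by (auto simp: pw_def ua)

lemma u_pw: "i \<ge> 1 \<Longrightarrow> u i * pw i k = pw i k"
proof (induction k)
  case 0 then show ?case by (simp add: pw_def ua)
next
  case (Suc k)
  then show ?case using pw_Suc[of i] 
    by (metis mult.assoc ua(1))
qed

definition ev :: "nat \<Rightarrow> complex poly \<Rightarrow> 'a" where
  "ev i p = (\<Sum>k\<le>degree p. smul (coeff p k) (pw i k))"

lemma ev_bound: "degree p \<le> D \<Longrightarrow> ev i p = (\<Sum>k\<le>D. smul (coeff p k) (pw i k))"
  unfolding ev_def
  by (rule sum.mono_neutral_left) (auto simp: coeff_eq_0)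

lemma ev_0[simp]: "ev i 0 = 0" by (simp add: ev_def)

lemma ev_add: "ev i (p + q) = ev i p + ev i q"
proof -
  let ?D = "max (degree p) (degree q)"
  have "ev i (p + q) = (\<Sum>k\<le>?D. smul (coeff (p+q) k) (pw i k))"
    by (rule ev_bound) (simp add: degree_add_le)
  also have "\<dots> = (\<Sum>k\<le>?D. smul (coeff p k) (pw i k)) + (\<Sum>k\<le>?D. smul (coeff q k) (pw i k))"
    by (simp add: smul_add_left sum.distrib)
  also have "\<dots> = ev i p + ev i q"
    by (simp add: ev_bound[symmetric])
  finally show ?thesis .
qed

lemma ev_smult: "ev i (smult c p) = smul c (ev i p)"
proof -
  have "ev i (smult c p) = (\<Sum>k\<le>degree p. smul (coeff (smult c p) k) (pw i k))"
    by (rule ev_bound) simp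
  also have "\<dots> = smul c (ev i p)"
    by (simp add: ev_def smul_sum smul_smul)
  finally show ?thesis .
qed

lemma ev_diff: "ev i (p - q) = ev i p - ev i q"
proof -
  have "p - q = p + smult (-1) q" by simp
  then have "ev i (p - q) = ev i p + smul (-1) (ev i q)" by (simp only: ev_add ev_smult)
  then show ?thesis by (simp add: smul_neg1)
qed

lemma ev_pCons: "i \<ge> 1 \<Longrightarrow> ev i (pCons c p) = smul c (u i) + a i * ev i p"
proof -
  assume i: "i \<ge> 1"
  have "ev i (pCons c p) = (\<Sum>k\<le>Suc (degree p). smul (coeff (pCons c p) k) (pw i k))"
    by (rule ev_bound) (simp add: degree_pCons_le)
  also have "\<dots> = smul c (u i) + (\<Sum>k\<le>degree p. smul (coeff p k) (pw i (Suc k)))"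
    by (simp only: sum.atMost_Suc_shift coeff_pCons_0 coeff_pCons_Suc) (simp add: pw_def)
  also have "\<dots> = smul c (u i) + a i * ev i p"
    by (simp add: ev_def sum_distrib_left pw_Suc[OF i] smul_multR)
  finally show ?thesis .
qed

lemma u_ev: "i \<ge> 1 \<Longrightarrow> u i * ev i p = ev i p"
  by (simp add: ev_def sum_distrib_left smul_multR u_pw)

lemma ev_mult: "i \<ge> 1 \<Longrightarrow> ev i (p * q) = ev i p * ev i q"
proof (induction p rule: pCons_induct)
  case 0 then show ?case by simp
next
  case (pCons c p)
  have "ev i (pCons c p * q) = ev i (smult c q + pCons 0 (p * q))"
    by simp
  also have "\<dots> = smul c (ev i q) + a i * (ev i p * ev i q)"
    using pCons by (simp add: ev_add ev_smult ev_pCons)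
  also have "\<dots> = ev i (pCons c p) * ev i q"
    using pCons by (simp add: ev_pCons distrib_right smul_multL u_ev mult.assoc)
  finally show ?case .
qed

lemma ev_const: "ev i [:c:] = smul c (u i)"
  by (simp add: ev_def pw_def)

lemma ev_one: "ev i 1 = u i"
  by (simp add: ev_def pw_def one_pCons)

definition X :: "complex poly" where "X = [:0,1:]"

lemma ev_X: "i \<ge> 1 \<Longrightarrow> ev i X = a i"
  by (simp add: X_def ev_pCons ev_one ua)

lemma ev_X2: "i \<ge> 1 \<Longrightarrow> ev i (X * X) = a i ^ 2"
  by (simp add: ev_mult ev_X power2_eq_square)

lemma gen_alg_sum: "finite A \<Longrightarrow> A \<noteq> {} \<Longrightarrow> (\<And>x. x \<in> A \<Longrightarrow> f x \<in> gen_alg smul S) \<Longrightarrow> sum f A \<in> gen_alg smul S"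
proof (induction A rule: finite_ne_induct)
  case (singleton x) then show ?case by simp
next
  case (insert x F) then show ?case by (simp add: gen_add)
qed

lemma pw_mem: "pw i k \<in> gen_alg smul {a i, u i}"
proof (induction k)
  case 0 then show ?case by (simp add: pw_def gen_base)
next
  case (Suc k)
  have "pw i (Suc k) = a i ^ (Suc k)" by (simp add: pw_def)
  moreover have "a i ^ Suc k \<in> gen_alg smul {a i, u i}"
  proof (induction k)
    case 0 then show ?case by (simp add: gen_base)
  next
    case (Suc k) then show ?case by (metis gen_mult gen_alg_mem_a power_Suc)
  qed
  ultimately show ?case by simp
qed

lemma ev_mem: "ev i p \<in> gen_alg smul {a i, u i}"
  unfolding ev_def by (rule gen_alg_sum) (auto intro: gen_smul pw_mem)

definition mom :: "nat \<Rightarrow> complex" where "mom k = (if k = 0 then 1 else \<phi> (a 1 ^ k))"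

definition cc :: "complex poly \<Rightarrow> complex" where
  "cc p = (\<Sum>k\<le>degree p. coeff p k * mom k)"

lemma phi_pw: "i \<ge> 1 \<Longrightarrow> \<phi> (pw i k) = mom k"
proof -
  assume i: "i \<ge> 1"
  have "\<phi> (a i ^ k) = \<phi> (a 1 ^ k)" using idd i by blast
  then show ?thesis using phi_u[OF i] by (simp add: pw_def mom_def)
qed

lemma phi_ev: "i \<ge> 1 \<Longrightarrow> \<phi> (ev i p) = cc p"
  by (simp add: ev_def phi_sum phi_smul phi_pw cc_def)

lemma cc_center: "cc (p - [:cc p:]) = 0"
proof -
  have "\<phi> (ev 1 (p - [:cc p:])) = \<phi> (ev 1 p - smul (cc p) (u 1))"
    by (simp add: ev_diff ev_const)
  also have "ev 1 p - smul (cc p) (u 1) = ev 1 p + smul (- cc p) (u 1)"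
    by (simp add: smul_neg1[symmetric] smul_smul)
  also have "\<phi> \<dots> = 0" by (simp add: phi_add phi_smul phi_ev phi_u)
  finally show ?thesis by (simp add: phi_ev)
qed

lemma cc_X: "cc X = 0"
proof -
  have "\<phi> (a 1) = 0" using m12 by simp
  then show ?thesis using phi_ev[of 1 X] ev_X[of 1] by simp
qed
lemma cc_X2m1: "cc (X * X - 1) = 0"
proof -
  have "\<phi> (a 1 ^ 2) = 1" using m12 by simp
  moreover have "ev 1 (X * X - 1) = a 1 ^ 2 + smul (-1) (u 1)"
    by (simp add: ev_diff ev_X2 ev_one smul_neg1)
  ultimately show ?thesis using phi_ev[of 1 "X*X - 1"] phi_u[of 1] by (simp add: phi_add phi_smul)
qed

end


lemma vseq_single[simp]: "vseq [x]"
  unfolding vseq_def by (rule conjI, simp, rule exI[of _ 1]) simp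

lemma vseq_take: assumes "vseq xs" "0 < n" shows "vseq (take n xs)"
proof (cases "length xs \<le> n")
  case True then show ?thesis using assms by simp
next
  case False
  from assms obtain m where m: "1 \<le> m" "m \<le> length xs" "sorted_wrt (>) (take m xs)"
    "sorted_wrt (<) (drop (m - 1) xs)" unfolding vseq_def by blast
  show ?thesis
  proof (cases "m \<le> n")
    case True
    have "sorted_wrt (>) (take m (take n xs))" using m True by (simp add: min_def)
    moreover have "drop (m - 1) (take n xs) = take (n - (m - 1)) (drop (m - 1) xs)"
      by (simp add: drop_take)
    then have "sorted_wrt (<) (drop (m - 1) (take n xs))" using m(4) sorted_wrt_take by metis
    ultimately show ?thesis unfolding vseq_def using m True False assms(2)
      by (intro conjI exI[of _ m]) auto
  next
    case nle: False
    have "sorted_wrt (>) (take n (take n xs))" using m nle sorted_wrt_take[OF m(3), of n] by (simp add: min_def)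
    moreover have "drop (n - 1) (take n xs) = [xs ! (n - 1)]"
    proof -
      have "take n xs = take (n - 1) xs @ [xs ! (n - 1)]"
        using False assms(2) take_Suc_conv_app_nth[of "n - 1" xs] by simp
      then show ?thesis using False assms(2) by simp
    qed
    then have "sorted_wrt (<) (drop (n - 1) (take n xs))" by simp
    ultimately show ?thesis unfolding vseq_def using False assms(2)
      by (intro conjI exI[of _ n]) auto
  qed
qed


lemma vseq_drop: assumes "vseq xs" "i < length xs" shows "vseq (drop i xs)"
proof -
  from assms obtain m where m: "1 \<le> m" "m \<le> length xs" "sorted_wrt (>) (take m xs)"
    "sorted_wrt (<) (drop (m - 1) xs)" unfolding vseq_def by blast
  show ?thesis
  proof (cases "i < m")
    case True
    have "take (m - i) (drop i xs) = drop i (take m xs)" using True by (simp add: take_drop)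
    then have "sorted_wrt (>) (take (m - i) (drop i xs))" using m(3) sorted_wrt_drop by metis
    moreover have "drop (m - i - 1) (drop i xs) = drop (m - 1) xs" using True by simp
    ultimately show ?thesis unfolding vseq_def using m True assms(2)
      by (intro conjI exI[of _ "m - i"]) auto
  next
    case False
    have "take 1 (drop i xs) = [xs ! i]" using assms(2)
      by (simp add: take_Suc_conv_app_nth[of 0] hd_drop_conv_nth take_Suc)
    moreover have "drop i xs = drop (i - (m - 1)) (drop (m - 1) xs)" using False m by simp
    then have "sorted_wrt (<) (drop i xs)" using m(4) sorted_wrt_drop by metis
    ultimately show ?thesis unfolding vseq_def using assms(2)
      by (intro conjI exI[of _ 1]) auto
  qed
qed

lemma vseq_rev: assumes "vseq xs" shows "vseq (rev xs)"
proof -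
  from assms obtain m where m: "1 \<le> m" "m \<le> length xs" "sorted_wrt (>) (take m xs)"
    "sorted_wrt (<) (drop (m - 1) xs)" unfolding vseq_def by blast
  let ?m = "length xs - m + 1"
  have "take ?m (rev xs) = rev (drop (length xs - ?m) xs)" by (simp add: take_rev)
  also have "length xs - ?m = m - 1" using m by simp
  finally have A: "sorted_wrt (>) (take ?m (rev xs))" using m(4) by (simp add: sorted_wrt_rev)
  have "drop (?m - 1) (rev xs) = rev (take (length xs - (?m - 1)) xs)" by (simp add: drop_rev)
  also have "length xs - (?m - 1) = m" using m by simp
  finally have B: "sorted_wrt (<) (drop (?m - 1) (rev xs))" using m(3) by (simp add: sorted_wrt_rev)
  show ?thesis unfolding vseq_def using A B m assms
    by (intro conjI exI[of _ ?m]) (auto simp: vseq_def)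
qed

lemma vseq_rev_iff: "vseq (rev xs) \<longleftrightarrow> vseq xs"
  using vseq_rev[of xs] vseq_rev[of "rev xs"] by auto

lemma vseq_infix: assumes "vseq xs" "take n (drop i xs) \<noteq> []" shows "vseq (take n (drop i xs))"
proof -
  have "i < length xs" "0 < n" using assms(2) by auto
  then show ?thesis using vseq_take vseq_drop assms(1) by blast
qed

lemma vseq_Nil[simp]: "\<not> vseq []" by (simp add: vseq_def)

lemma vseq_map: assumes "strict_mono_on (set xs) f" shows "vseq (map f xs) \<longleftrightarrow> vseq xs"
proof -
  have eq1: "sorted_wrt (>) (map f ys) \<longleftrightarrow> sorted_wrt (>) ys" if "set ys \<subseteq> set xs" for ys
  proof -
    have "sorted_wrt (>) (map f ys) \<longleftrightarrow> sorted_wrt (\<lambda>x y. f y < f x) ys" by (simp add: sorted_wrt_map)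
    also have "\<dots> \<longleftrightarrow> sorted_wrt (\<lambda>x y. y < x) ys"
    proof
      assume h: "sorted_wrt (\<lambda>x y. f y < f x) ys"
      show "sorted_wrt (\<lambda>x y. y < x) ys"
        by (rule sorted_wrt_mono_rel[OF _ h]) (use that strict_mono_on_less[OF assms] in auto)
    next
      assume h: "sorted_wrt (\<lambda>x y. y < x) ys"
      show "sorted_wrt (\<lambda>x y. f y < f x) ys"
        by (rule sorted_wrt_mono_rel[OF _ h]) (use that strict_mono_on_less[OF assms] in auto)
    qed
    finally show ?thesis .
  qed
  have eq2: "sorted_wrt (<) (map f ys) \<longleftrightarrow> sorted_wrt (<) ys" if "set ys \<subseteq> set xs" for ys
  proof -
    have "sorted_wrt (<) (map f ys) \<longleftrightarrow> sorted_wrt (\<lambda>x y. f x < f y) ys" by (simp add: sorted_wrt_map)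
    also have "\<dots> \<longleftrightarrow> sorted_wrt (\<lambda>x y. x < y) ys"
    proof
      assume h: "sorted_wrt (\<lambda>x y. f x < f y) ys"
      show "sorted_wrt (\<lambda>x y. x < y) ys"
        by (rule sorted_wrt_mono_rel[OF _ h]) (use that strict_mono_on_less[OF assms] in auto)
    next
      assume h: "sorted_wrt (\<lambda>x y. x < y) ys"
      show "sorted_wrt (\<lambda>x y. f x < f y) ys"
        by (rule sorted_wrt_mono_rel[OF _ h]) (use that strict_mono_on_less[OF assms] in auto)
    qed
    finally show ?thesis .
  qed
  have s1: "set (take m xs) \<subseteq> set xs" "set (drop m xs) \<subseteq> set xs" for m
    by (auto dest: in_set_takeD in_set_dropD)
  show ?thesis unfolding vseq_def using eq1[OF s1(1)] eq2[OF s1(2)]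
    by (simp add: take_map drop_map)
qed

lemma vseq_Greatest:
  assumes "is \<noteq> []" "j < length is"
  shows "j < (GREATEST r. r \<le> length is \<and> vseq (take r is)) \<longleftrightarrow> vseq (take (Suc j) is)"
proof -
  let ?G = "GREATEST r. r \<le> length is \<and> vseq (take r is)"
  have ex: "1 \<le> length is \<and> vseq (take 1 is)" using assms by (cases "is") auto
  have bnd: "\<forall>y. y \<le> length is \<and> vseq (take y is) \<longrightarrow> y \<le> length is" by simp
  have G: "?G \<le> length is \<and> vseq (take ?G is)"
    by (rule GreatestI_nat[where P="\<lambda>r. r \<le> length is \<and> vseq (take r is)", OF ex]) auto
  show ?thesis
  proof
    assume "j < ?G"
    then have "take (Suc j) is = take (Suc j) (take ?G is)" by (simp add: min_def)
    moreover have "vseq (take (Suc j) (take ?G is))" using vseq_take G by blast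
    ultimately show "vseq (take (Suc j) is)" by simp
  next
    assume "vseq (take (Suc j) is)"
    then have "Suc j \<le> ?G" using assms(2) by (intro Greatest_le_nat[where b = "length is"]) auto
    then show "j < ?G" by simp
  qed
qed

type_synonym wd = "(nat \<times> complex poly) list"

fun mrg :: "wd \<Rightarrow> wd" where
  "mrg (x # y # xs) = (if fst x = fst y then mrg ((fst x, snd x * snd y) # xs) else x # mrg (y # xs))"
| "mrg xs = xs"

lemma mrg_hd: "W \<noteq> [] \<Longrightarrow> mrg W \<noteq> [] \<and> fst (hd (mrg W)) = fst (hd W)"
  by (induction W rule: mrg.induct) auto

lemma mrg_succ: "successively (\<noteq>) (map fst (mrg W))"
proof (induction W rule: mrg.induct)
  case (1 x y xs)
  show ?case
  proof (cases "fst x = fst y")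
    case True then show ?thesis using 1 by simp
  next
    case False
    have "mrg (y # xs) \<noteq> []" "fst (hd (mrg (y # xs))) = fst y" using mrg_hd[of "y # xs"] by auto
    then show ?thesis using 1 False by (cases "mrg (y # xs)") (auto simp: successively_Cons)
  qed
qed auto

lemma mrg_len: "length (mrg W) \<le> length W"
  by (induction W rule: mrg.induct) (auto simp: le_Suc_eq)

lemma mrg_len_less: "\<not> successively (\<noteq>) (map fst W) \<Longrightarrow> length (mrg W) < length W"
proof (induction W rule: mrg.induct)
  case (1 x y xs)
  show ?case
  proof (cases "fst x = fst y")
    case True then show ?thesis using mrg_len[of "(fst x, snd x * snd y) # xs"] by simp
  next
    case False then show ?thesis using 1 by (auto simp: successively_Cons)
  qed
qed auto

lemma mrg_id: "successively (\<noteq>) (map fst W) \<Longrightarrow> mrg W = W"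
  by (induction W rule: mrg.induct) (auto simp: successively_Cons)

lemma mrg_set: "set (map fst (mrg W)) \<subseteq> set (map fst W)"
  by (induction W rule: mrg.induct) auto

lemma mrg_map: "inj_on f (set (map fst W)) \<Longrightarrow> mrg (map (apfst f) W) = map (apfst f) (mrg W)"
proof (induction W rule: mrg.induct)
  case (1 x y xs)
  have e: "f (fst x) = f (fst y) \<longleftrightarrow> fst x = fst y" using 1(3) by (auto dest: inj_onD)
  show ?case
  proof (cases "fst x = fst y")
    case True
    have "inj_on f (set (map fst ((fst x, snd x * snd y) # xs)))" using 1(3) by (auto intro: inj_on_subset)
    then show ?thesis using 1 True by (simp add: apfst_def map_prod_def split_beta)
  next
    case False
    have "inj_on f (set (map fst (y # xs)))" using 1(3) by (auto intro: inj_on_subset)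
    then show ?thesis using 1 False e by (simp add: apfst_def map_prod_def split_beta)
  qed
qed auto

lemma mrg_count: "count_list (map fst (mrg W)) i \<le> count_list (map fst W) i"
  by (induction W rule: mrg.induct) auto

lemma mrg_single: "count_list (map fst W) i = 1 \<Longrightarrow> (i, p) \<in> set W \<Longrightarrow> (i, p) \<in> set (mrg W)"
proof (induction W rule: mrg.induct)
  case (1 x y xs)
  show ?case
  proof (cases "fst x = fst y")
    case True
    have "(i, p) \<noteq> x" "(i, p) \<noteq> y" using 1(3) True by (auto split: if_splits)
    then have "(i, p) \<in> set xs" using 1(4) by auto
    moreover have "i \<noteq> fst x" using 1(3) True by (auto split: if_splits)
    ultimately show ?thesis using 1 True by auto
  next
    case False
    have m: "mrg (x # y # xs) = x # mrg (y # xs)" using False by simp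
    show ?thesis
    proof (cases "(i, p) = x")
      case True then show ?thesis using m by simp
    next
      case ne: False
      then have mem: "(i, p) \<in> set (y # xs)" using 1(4) by simp
      then have "i \<in> set (map fst (y # xs))" by force
      then have "count_list (map fst (y # xs)) i \<noteq> 0" by (simp only: count_list_0_iff) simp
      moreover have "count_list (map fst (y # xs)) i \<le> count_list (map fst (x # y # xs)) i" by simp
      ultimately have "count_list (map fst (y # xs)) i = 1" using 1(3) by linarith
      then show ?thesis using 1(2)[OF False _ mem] m by simp
    qed
  qed
qed auto


context vsetup begin

definition evp :: "nat \<times> complex poly \<Rightarrow> 'a" where "evp x = ev (fst x) (snd x)"

definition P :: "wd \<Rightarrow> 'a" where "P W = prod_list (map evp W)"

lemma P_Nil[simp]: "P [] = 1" by (simp add: P_def)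
lemma P_Cons: "P (x # W) = evp x * P W" by (simp add: P_def)
lemma P_append: "P (V @ W) = P V * P W" by (simp add: P_def)

lemma P_mrg: "set (map fst W) \<subseteq> {1..} \<Longrightarrow> P (mrg W) = P W"
proof (induction W rule: mrg.induct)
  case (1 x y xs)
  show ?case
  proof (cases "fst x = fst y")
    case True
    have "P (mrg (x # y # xs)) = P ((fst x, snd x * snd y) # xs)" using 1 True by auto
    also have "\<dots> = P (x # y # xs)" using 1(3) True
      by (simp add: P_Cons evp_def ev_mult mult.assoc)
    finally show ?thesis .
  next
    case False then show ?thesis using 1 by (simp add: P_Cons)
  qed
qed auto

lemma P_upd: "j < length W \<Longrightarrow> P (W[j := x]) = P (take j W) * evp x * P (drop (Suc j) W)"
  by (simp add: upd_conv_take_nth_drop P_append P_Cons mult.assoc)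

lemma P_nth: "j < length W \<Longrightarrow> P W = P (take j W) * evp (W ! j) * P (drop (Suc j) W)"
  using P_upd[of j W "W ! j"] by simp

lemma CL:
  assumes "successively (\<noteq>) (map fst W)" "set (map fst W) \<subseteq> {1..}" "j < length W"
    "\<forall>k<j. cc (snd (W ! k)) = 0"
  shows "\<phi> (P (W[j := (fst (W ! j), 1)])) =
    (if vseq (take (Suc j) (map fst W)) then \<phi> (P (take j W @ drop (Suc j) W)) else 0)"
proof -
  let ?is = "map fst W" and ?as = "map evp W"
  let ?A = "\<lambda>i. gen_alg smul {a i, u i}"
  have H: "\<forall>is as. is \<noteq> [] \<and> set is \<subseteq> {1..} \<and> length as = length is \<and>
        (\<forall>k. Suc k < length is \<longrightarrow> is ! k \<noteq> is ! Suc k) \<and>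
        (\<forall>k < length is. as ! k \<in> ?A (is ! k)) \<longrightarrow>
      ((\<forall>k < length as. \<phi> (as ! k) = 0) \<longrightarrow> \<phi> (prod_list as) = 0) \<and>
      (let r = (GREATEST r. r \<le> length is \<and> vseq (take r is)) in
        \<forall>j < length is. (\<forall>k < j. \<phi> (as ! k) = 0) \<longrightarrow>
          \<phi> (prod_list (as[j := u (is ! j)])) =
            (if j < r then \<phi> (prod_list (take j as @ drop (Suc j) as)) else 0))"
    using vi unfolding vmono_indep_def by blast
  have c1: "?is \<noteq> []" using assms(3) by auto
  have c2: "\<forall>k. Suc k < length ?is \<longrightarrow> ?is ! k \<noteq> ?is ! Suc k"
    using assms(1) by (simp add: successively_conv_nth)
  have c3: "\<forall>k < length ?is. ?as ! k \<in> ?A (?is ! k)" by (simp add: evp_def ev_mem)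
  have c4: "\<forall>k < j. \<phi> (?as ! k) = 0"
  proof (intro allI impI)
    fix k assume "k < j"
    then have "k < length W" using assms(3) by simp
    then have "fst (W ! k) \<ge> 1" using assms(2) by (auto dest!: nth_mem)
    then show "\<phi> (?as ! k) = 0" using assms(4) \<open>k < j\<close> \<open>k < length W\<close> by (simp add: evp_def phi_ev)
  qed
  have R: "\<phi> (prod_list (?as[j := u (?is ! j)])) =
            (if j < (GREATEST r. r \<le> length ?is \<and> vseq (take r ?is)) then \<phi> (prod_list (take j ?as @ drop (Suc j) ?as)) else 0)"
    using H[rule_format, OF conjI[OF c1 conjI[OF assms(2) conjI[OF _ conjI[OF c2 c3]]]]] c4 assms(3)
    unfolding Let_def by simp
  have e1: "?as[j := u (?is ! j)] = map evp (W[j := (fst (W ! j), 1)])"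
    using assms(3) by (simp add: map_update evp_def ev_one)
  have e2: "take j ?as @ drop (Suc j) ?as = map evp (take j W @ drop (Suc j) W)"
    by (simp add: take_map drop_map)
  have G: "j < (GREATEST r. r \<le> length ?is \<and> vseq (take r ?is)) \<longleftrightarrow> vseq (take (Suc j) ?is)"
    using vseq_Greatest[OF c1, of j] assms(3) by simp
  from R have "\<phi> (prod_list (map evp (W[j := (fst (W ! j), 1)]))) = (if vseq (take (Suc j) ?is)
     then \<phi> (prod_list (map evp (take j W @ drop (Suc j) W))) else 0)"
    unfolding e1 e2 G .
  then show ?thesis unfolding P_def .
qed

lemma CL0:
  assumes "successively (\<noteq>) (map fst W)" "set (map fst W) \<subseteq> {1..}" "W \<noteq> []"
    "\<forall>k<length W. cc (snd (W ! k)) = 0"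
  shows "\<phi> (P W) = 0"
proof -
  let ?is = "map fst W" and ?as = "map evp W"
  let ?A = "\<lambda>i. gen_alg smul {a i, u i}"
  have H: "\<forall>is as. is \<noteq> [] \<and> set is \<subseteq> {1..} \<and> length as = length is \<and>
        (\<forall>k. Suc k < length is \<longrightarrow> is ! k \<noteq> is ! Suc k) \<and>
        (\<forall>k < length is. as ! k \<in> ?A (is ! k)) \<longrightarrow>
      ((\<forall>k < length as. \<phi> (as ! k) = 0) \<longrightarrow> \<phi> (prod_list as) = 0)"
    using vi unfolding vmono_indep_def by blast
  have c1: "?is \<noteq> []" using assms(3) by auto
  have c2: "\<forall>k. Suc k < length ?is \<longrightarrow> ?is ! k \<noteq> ?is ! Suc k"
    using assms(1) by (simp add: successively_conv_nth)
  have c3: "\<forall>k < length ?is. ?as ! k \<in> ?A (?is ! k)" by (simp add: evp_def ev_mem)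
  have c4: "\<forall>k < length ?as. \<phi> (?as ! k) = 0"
  proof (intro allI impI)
    fix k assume k: "k < length ?as"
    then have "fst (W ! k) \<ge> 1" using assms(2) by (auto dest!: nth_mem)
    then show "\<phi> (?as ! k) = 0" using assms(4) k by (simp add: evp_def phi_ev)
  qed
  show ?thesis
    using H[rule_format, OF conjI[OF c1 conjI[OF assms(2) conjI[OF _ conjI[OF c2 c3]]]]] c4
    by (simp add: P_def)
qed

lemma split_step:
  assumes "set (map fst W) \<subseteq> {1..}" "j < length W"
  shows "\<phi> (P W) = \<phi> (P (W[j := (fst (W ! j), snd (W ! j) - [:cc (snd (W ! j)):])]))
     + cc (snd (W ! j)) * \<phi> (P (W[j := (fst (W ! j), 1)]))"
proof -
  let ?i = "fst (W ! j)" and ?p = "snd (W ! j)"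
  let ?c = "cc ?p"
  let ?L = "P (take j W)" and ?R = "P (drop (Suc j) W)"
  have i: "?i \<ge> 1" using assms by (auto dest!: nth_mem)
  have "evp (W ! j) = ev ?i (?p - [:?c:]) + smul ?c (ev ?i 1)"
    by (simp add: evp_def ev_diff ev_const ev_one)
  then have "P W = ?L * ev ?i (?p - [:?c:]) * ?R + smul ?c (?L * ev ?i 1 * ?R)"
    using P_nth[OF assms(2)] by (simp add: distrib_left distrib_right smul_multL smul_multR)
  then show ?thesis using assms(2)
    by (simp add: P_upd phi_add phi_smul evp_def)
qed

definition ncnt :: "wd \<Rightarrow> nat" where "ncnt W = length (filter (\<lambda>x. cc (snd x) \<noteq> 0) W)"

lemma ncnt_le: "ncnt W \<le> length W" by (simp add: ncnt_def)

lemma ncnt_upd: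
  assumes "j < length W" "cc (snd (W ! j)) \<noteq> 0" "cc (snd x) = 0"
  shows "ncnt (W[j := x]) < ncnt W"
proof -
  have e: "filter (\<lambda>x. cc (snd x) \<noteq> 0) W = filter (\<lambda>x. cc (snd x) \<noteq> 0) (take j W @ W ! j # drop (Suc j) W)"
    using arg_cong[where f="filter (\<lambda>x. cc (snd x) \<noteq> 0)", OF id_take_nth_drop[OF assms(1)]] .
  have "ncnt W = ncnt (take j W) + 1 + ncnt (drop (Suc j) W)"
    unfolding ncnt_def e using assms(2) by simp
  moreover have "ncnt (W[j := x]) = ncnt (take j W) + ncnt (drop (Suc j) W)"
    using assms by (simp add: upd_conv_take_nth_drop ncnt_def)
  ultimately show ?thesis by simp
qed

lemma meas_less: "(m::nat) < n \<Longrightarrow> c \<le> m \<Longrightarrow> m * Suc m + c < n * Suc n + d"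
proof -
  assume "m < n" "c \<le> m"
  then have "Suc m * Suc m \<le> n * Suc n" by (intro mult_le_mono) auto
  then show ?thesis using \<open>c \<le> m\<close> by simp
qed

lemma remove_set: "j < length W \<Longrightarrow> set W \<subseteq> insert (W ! j) (set (take j W @ drop (Suc j) W))"
proof -
  assume j: "j < length W"
  have "set W = set (take j W @ W ! j # drop (Suc j) W)"
    using arg_cong[where f=set, OF id_take_nth_drop[OF j]] .
  then show ?thesis by auto
qed

lemma remove_len: "j < length W \<Longrightarrow> length (take j W @ drop (Suc j) W) < length W"
  by simp

lemma remove_sub: "set (take j W @ drop (Suc j) W) \<subseteq> set W"
  by (auto dest: in_set_takeD in_set_dropD)

lemma remove_count: "j < length W \<Longrightarrow> count_list (map fst (take j W @ drop (Suc j) W)) i \<le> count_list (map fst W) i"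
proof -
  assume j: "j < length W"
  have "map fst W = map fst (take j W @ W ! j # drop (Suc j) W)"
    using arg_cong[where f="map fst", OF id_take_nth_drop[OF j]] .
  then show ?thesis by simp
qed

end


context vsetup begin

lemma first_noncentered:
  assumes "\<exists>k<length W. cc (snd (W ! k)) \<noteq> 0"
  obtains j where "j < length W" "cc (snd (W ! j)) \<noteq> 0" "\<forall>k<j. cc (snd (W ! k)) = 0"
proof -
  let ?j = "LEAST k. k < length W \<and> cc (snd (W ! k)) \<noteq> 0"
  have "?j < length W \<and> cc (snd (W ! ?j)) \<noteq> 0" using assms by (metis (mono_tags, lifting) LeastI)
  moreover have "\<forall>k<?j. cc (snd (W ! k)) = 0"
    using not_less_Least calculation by (metis (mono_tags, lifting) order.strict_trans)
  ultimately show ?thesis using that by blast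
qed

lemma singleton_zero:
  "set (map fst W) \<subseteq> {1..} \<Longrightarrow> (i, p) \<in> set W \<Longrightarrow> count_list (map fst W) i = 1 \<Longrightarrow> cc p = 0
   \<Longrightarrow> \<phi> (P W) = 0"
proof (induction "length W * Suc (length W) + ncnt W" arbitrary: W rule: less_induct)
  case less
  show ?case
  proof (cases "successively (\<noteq>) (map fst W)")
    case False
    let ?W = "mrg W"
    have l: "length ?W < length W" using mrg_len_less[OF False] .
    have "length ?W * Suc (length ?W) + ncnt ?W < length W * Suc (length W) + ncnt W"
      by (rule meas_less[OF l ncnt_le])
    moreover have "set (map fst ?W) \<subseteq> {1..}" using mrg_set less(2) by blast
    moreover have "(i, p) \<in> set ?W" using mrg_single less(3,4) by blast
    moreover have "count_list (map fst ?W) i = 1"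
    proof -
      have "i \<in> set (map fst ?W)" using \<open>(i, p) \<in> set ?W\<close> by force
      then have "count_list (map fst ?W) i \<noteq> 0" by (simp only: count_list_0_iff) simp
      then show ?thesis using mrg_count[of W i] less(4) by linarith
    qed
    ultimately have "\<phi> (P ?W) = 0" using less(1) less(5) by blast
    then show ?thesis using P_mrg[OF less(2)] by simp
  next
    case succ: True
    show ?thesis
    proof (cases "\<exists>k<length W. cc (snd (W ! k)) \<noteq> 0")
      case False
      moreover have "W \<noteq> []" using less(3) by auto
      ultimately show ?thesis using CL0[OF succ less(2)] by auto
    next
      case True
      then obtain j where j: "j < length W" "cc (snd (W ! j)) \<noteq> 0" "\<forall>k<j. cc (snd (W ! k)) = 0"
        by (rule first_noncentered)
      let ?c = "cc (snd (W ! j))"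
      let ?W1 = "W[j := (fst (W ! j), snd (W ! j) - [:?c:])]"
      let ?W2 = "W[j := (fst (W ! j), 1)]"
      let ?R = "take j W @ drop (Suc j) W"
      have ne: "(i, p) \<noteq> W ! j" using j(2) less(5) by (metis snd_conv)
      have f1: "map fst ?W1 = map fst W" 
      proof -
        have "(map fst W)[j := fst (W ! j)] = (map fst W)[j := (map fst W) ! j]" using j(1) by simp
        then show ?thesis by (simp add: map_update)
      qed
      have "ncnt ?W1 < ncnt W" using ncnt_upd[OF j(1,2)] cc_center by simp
      then have m1: "length ?W1 * Suc (length ?W1) + ncnt ?W1 < length W * Suc (length W) + ncnt W" by simp
      have "(i, p) \<in> set ?W1"
      proof -
        obtain k where k: "k < length W" "W ! k = (i, p)" using less(3) by (metis in_set_conv_nth)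
        then have "k \<noteq> j" using ne by auto
        then have "?W1 ! k = (i, p)" using k by simp
        then show ?thesis using k by (metis length_list_update nth_mem)
      qed
      then have z1: "\<phi> (P ?W1) = 0" using less(1)[OF m1] less(2,4,5) f1 by simp
      have mR: "length ?R * Suc (length ?R) + ncnt ?R < length W * Suc (length W) + ncnt W"
        by (rule meas_less[OF remove_len[OF j(1)] ncnt_le])
      have sR: "set (map fst ?R) \<subseteq> {1..}" using remove_sub less(2) by force
      have iR: "(i, p) \<in> set ?R" using remove_set[OF j(1)] less(3) ne by blast
      have cR: "count_list (map fst ?R) i = 1"
      proof -
        have "i \<in> set (map fst ?R)" using iR by force
        then have "count_list (map fst ?R) i \<noteq> 0" by (simp only: count_list_0_iff) simp
        then show ?thesis using remove_count[OF j(1), of i] less(4) by linarith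
      qed
      have z2: "\<phi> (P ?R) = 0" using less(1)[OF mR sR iR cR less(5)] .
      have "\<phi> (P ?W2) = 0" using CL[OF succ less(2) j(1) j(3)] z2 by simp
      then show ?thesis using split_step[OF less(2) j(1)] z1 by simp
    qed
  qed
qed

lemma invariance:
  "set (map fst W) \<subseteq> {1..} \<Longrightarrow> strict_mono_on (set (map fst W)) f \<Longrightarrow> f ` set (map fst W) \<subseteq> {1..}
   \<Longrightarrow> \<phi> (P (map (apfst f) W)) = \<phi> (P W)"
proof (induction "length W * Suc (length W) + ncnt W" arbitrary: W rule: less_induct)
  case less
  let ?g = "apfst f"
  have inj: "inj_on f (set (map fst W))" using strict_mono_on_imp_inj_on[OF less(3)] .
  have fm: "map fst (map ?g W) = map f (map fst W)" by simp
  have sm: "set (map fst (map ?g W)) \<subseteq> {1..}" using less(4) by auto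
  have succ_iff: "successively (\<noteq>) (map fst (map ?g W)) \<longleftrightarrow> successively (\<noteq>) (map fst W)"
    unfolding fm successively_map
    by (rule successively_cong) (use inj in \<open>auto dest: inj_onD\<close>)
  have sub: "strict_mono_on A f" "f ` A \<subseteq> {1..}" if "A \<subseteq> set (map fst W)" for A
  proof -
    show "strict_mono_on A f" using monotone_on_subset[OF less(3) that] .
    show "f ` A \<subseteq> {1..}" using less(4) that by (meson image_mono order_trans)
  qed
  show ?case
  proof (cases "successively (\<noteq>) (map fst W)")
    case False
    let ?W = "mrg W"
    have l: "length ?W < length W" using mrg_len_less[OF False] .
    have m: "length ?W * Suc (length ?W) + ncnt ?W < length W * Suc (length W) + ncnt W"
      by (rule meas_less[OF l ncnt_le])
    have s: "set (map fst ?W) \<subseteq> {1..}" using mrg_set less(2) by blast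
    have "\<phi> (P (map ?g ?W)) = \<phi> (P ?W)" using less(1)[OF m s sub[OF mrg_set]] .
    moreover have "map ?g ?W = mrg (map ?g W)" using mrg_map[OF inj] by simp
    ultimately show ?thesis using P_mrg[OF less(2)] P_mrg[OF sm] by simp
  next
    case succ: True
    have succ': "successively (\<noteq>) (map fst (map ?g W))" using succ succ_iff by simp
    show ?thesis
    proof (cases "\<exists>k<length W. cc (snd (W ! k)) \<noteq> 0")
      case False
      show ?thesis
      proof (cases "W = []")
        case True then show ?thesis by simp
      next
        case ne: False
        have "\<forall>k<length (map ?g W). cc (snd (map ?g W ! k)) = 0" using False by simp
        then show ?thesis using CL0[OF succ less(2) ne] CL0[OF succ' sm] False ne by auto
      qed
    next
      case True
      then obtain j where j: "j < length W" "cc (snd (W ! j)) \<noteq> 0" "\<forall>k<j. cc (snd (W ! k)) = 0"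
        by (rule first_noncentered)
      let ?c = "cc (snd (W ! j))"
      let ?W1 = "W[j := (fst (W ! j), snd (W ! j) - [:?c:])]"
      let ?W2 = "W[j := (fst (W ! j), 1)]"
      let ?R = "take j W @ drop (Suc j) W"
      have j': "j < length (map ?g W)" "\<forall>k<j. cc (snd (map ?g W ! k)) = 0" using j by auto
      have f1: "map fst ?W1 = map fst W"
      proof -
        have "(map fst W)[j := fst (W ! j)] = (map fst W)[j := (map fst W) ! j]" using j(1) by simp
        then show ?thesis by (simp add: map_update)
      qed
      have "ncnt ?W1 < ncnt W" using ncnt_upd[OF j(1,2)] cc_center by simp
      then have m1: "length ?W1 * Suc (length ?W1) + ncnt ?W1 < length W * Suc (length W) + ncnt W" by simp
      have e1: "\<phi> (P (map ?g ?W1)) = \<phi> (P ?W1)" using less(1)[OF m1] less(2-4) f1 by simp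
      have mR: "length ?R * Suc (length ?R) + ncnt ?R < length W * Suc (length W) + ncnt W"
        by (rule meas_less[OF remove_len[OF j(1)] ncnt_le])
      have sRsub: "set (map fst ?R) \<subseteq> set (map fst W)" using remove_sub by force
      have sR: "set (map fst ?R) \<subseteq> {1..}" using sRsub less(2) by blast
      have eR: "\<phi> (P (map ?g ?R)) = \<phi> (P ?R)" using less(1)[OF mR sR sub[OF sRsub]] .
      have tsub: "set (take (Suc j) (map fst W)) \<subseteq> set (map fst W)" by (rule set_take_subset)
      have vs: "vseq (take (Suc j) (map fst (map ?g W))) \<longleftrightarrow> vseq (take (Suc j) (map fst W))"
      proof -
        have "take (Suc j) (map fst (map ?g W)) = map f (take (Suc j) (map fst W))" by (simp only: fm take_map)
        then show ?thesis using vseq_map[OF sub(1)[OF tsub]] by (simp only:)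
      qed
      have c1: "\<phi> (P ?W2) = (if vseq (take (Suc j) (map fst W)) then \<phi> (P ?R) else 0)"
        using CL[OF succ less(2) j(1) j(3)] .
      have c2: "\<phi> (P ((map ?g W)[j := (fst (map ?g W ! j), 1)])) =
          (if vseq (take (Suc j) (map fst (map ?g W))) then \<phi> (P (take j (map ?g W) @ drop (Suc j) (map ?g W))) else 0)"
        using CL[OF succ' sm j'(1) j'(2)] .
      have u2: "(map ?g W)[j := (fst (map ?g W ! j), 1)] = map ?g ?W2" using j(1) by (simp add: map_update)
      have uR: "take j (map ?g W) @ drop (Suc j) (map ?g W) = map ?g ?R" by (simp add: take_map drop_map)
      have u1: "(map ?g W)[j := (fst (map ?g W ! j), snd (map ?g W ! j) - [:cc (snd (map ?g W ! j)):])] = map ?g ?W1"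
        using j(1) by (simp add: map_update)
      have "\<phi> (P (map ?g W)) = \<phi> (P (map ?g ?W1)) + ?c * \<phi> (P (map ?g ?W2))"
        using split_step[OF sm j'(1)] j(1) unfolding u1 u2 by simp
      also have "\<dots> = \<phi> (P ?W1) + ?c * \<phi> (P ?W2)"
        using e1 c1 c2 vs eR unfolding u2 uR by simp
      also have "\<dots> = \<phi> (P W)" using split_step[OF less(2) j(1)] by simp
      finally show ?thesis .
    qed
  qed
qed

end


definition pairw :: "nat list \<Rightarrow> bool" where
  "pairw xs \<longleftrightarrow> (\<forall>v\<in>set xs. count_list xs v = 2)"

definition NCw :: "nat list \<Rightarrow> bool" where
  "NCw xs \<longleftrightarrow> \<not> (\<exists>a b c d. a < b \<and> b < c \<and> c < d \<and> d < length xs \<and>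
      xs ! a = xs ! c \<and> xs ! b = xs ! d \<and> xs ! a \<noteq> xs ! b)"

definition Fp :: "nat list \<Rightarrow> nat list" where
  "Fp t = filter (\<lambda>x. count_list t x = 1) t"

definition vok :: "nat list \<Rightarrow> bool" where "vok xs \<longleftrightarrow> xs = [] \<or> vseq xs"

definition VMw :: "nat list \<Rightarrow> bool" where
  "VMw xs \<longleftrightarrow> (\<forall>p<length xs. vok (Fp (take (Suc p) xs)))"

lemma other_occ:
  assumes "count_list xs (xs ! p) = 2" "p < length xs"
  shows "\<exists>c<length xs. c \<noteq> p \<and> xs ! c = xs ! p"
proof (rule ccontr)
  assume "\<not> ?thesis"
  then have "{i. i < length xs \<and> xs ! p = xs ! i} \<subseteq> {p}" by auto
  then have "card {i. i < length xs \<and> xs ! p = xs ! i} \<le> 1"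
    using card_mono[of "{p}"] by fastforce
  moreover have "card {i. i < length xs \<and> xs ! p = xs ! i} = 2"
    using assms(1) by (simp add: count_list_eq_length_filter length_filter_conv_card)
  ultimately show False by simp
qed

lemma NC_adj:
  assumes "NCw xs" "pairw xs"
  shows "a < b \<Longrightarrow> b < length xs \<Longrightarrow> xs ! a = xs ! b \<Longrightarrow> \<exists>i. a \<le> i \<and> Suc i \<le> b \<and> xs ! i = xs ! Suc i"
proof (induction "b - a" arbitrary: a b rule: less_induct)
  case less
  show ?case
  proof (cases "b = Suc a")
    case True then show ?thesis using less by auto
  next
    case False
    then have ab: "Suc a < b" using less(2) by simp
    show ?thesis
    proof (cases "xs ! Suc a = xs ! a")
      case True then show ?thesis using ab by (intro exI[of _ a]) auto
    next
      case ne: False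
      have "count_list xs (xs ! Suc a) = 2" using assms(2) ab less(3) unfolding pairw_def
        by (meson less_trans nth_mem)
      then obtain c where c: "c < length xs" "c \<noteq> Suc a" "xs ! c = xs ! Suc a"
        using other_occ ab less(3) by (meson less_trans)
      consider "c < a" | "c = a" | "Suc a < c \<and> c < b" | "c = b" | "b < c" using c(2) by linarith
      then show ?thesis
      proof cases
        case 1
        have "c < a \<and> a < Suc a \<and> Suc a < b \<and> b < length xs \<and> xs ! c = xs ! Suc a \<and> xs ! a = xs ! b \<and> xs ! c \<noteq> xs ! a"
          using 1 ab less(3,4) c ne by auto
        then have False using assms(1) unfolding NCw_def by blast
        then show ?thesis ..
      next
        case 2 then show ?thesis using c ne by simp
      next
        case 3
        then obtain i where "Suc a \<le> i \<and> Suc i \<le> c \<and> xs ! i = xs ! Suc i"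
          using less(1)[of c "Suc a"] c(3) less(3) by fastforce
        then show ?thesis using 3 by (intro exI[of _ i]) auto
      next
        case 4 then show ?thesis using c ne less(4) by simp
      next
        case 5
        have "a < Suc a \<and> Suc a < b \<and> b < c \<and> c < length xs \<and> xs ! a = xs ! b \<and> xs ! Suc a = xs ! c \<and> xs ! a \<noteq> xs ! Suc a"
          using 5 ab less(3,4) c ne by auto
        then have False using assms(1) unfolding NCw_def by blast
        then show ?thesis ..
      qed
    qed
  qed
qed

lemma succ_nth_neq: "successively (\<noteq>) xs \<Longrightarrow> Suc i < length xs \<Longrightarrow> xs ! i \<noteq> xs ! Suc i"
  by (simp add: successively_conv_nth)

lemma NC_not_succ:
  assumes "NCw xs" "pairw xs" "xs \<noteq> []" "successively (\<noteq>) xs"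
  shows False
proof -
  have "count_list xs (xs ! 0) = 2" using assms(2,3) unfolding pairw_def by auto
  then obtain c where c: "c < length xs" "c \<noteq> 0" "xs ! c = xs ! 0" using other_occ assms(3) by blast
  then obtain i where "0 \<le> i \<and> Suc i \<le> c \<and> xs ! i = xs ! Suc i"
    using NC_adj[OF assms(1,2), of 0 c] by auto
  then show False using succ_nth_neq[OF assms(4), of i] c by auto
qed

lemma NC_distinct_prefix:
  assumes "NCw xs" "pairw xs" "successively (\<noteq>) (take m xs)" "m \<le> length xs"
  shows "distinct (take m xs)"
proof -
  have "xs ! a \<noteq> xs ! b" if ab: "a < b" "b < m" for a b
  proof
    assume e: "xs ! a = xs ! b"
    have "b < length xs" using ab assms(4) by simp
    then obtain i where i: "a \<le> i \<and> Suc i \<le> b \<and> xs ! i = xs ! Suc i"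
      using NC_adj[OF assms(1,2) ab(1) _ e] by auto
    then have "take m xs ! i \<noteq> take m xs ! Suc i" using succ_nth_neq[OF assms(3), of i] that assms(4) by simp
    then show False using i ab by simp
  qed
  then show ?thesis using assms(4) by (auto simp: distinct_conv_nth nat_neq_iff)
qed

lemma first_adj: "\<not> successively (\<noteq>) xs \<Longrightarrow> \<exists>ys v zs. xs = ys @ [v, v] @ zs \<and> successively (\<noteq>) (ys @ [v])"
proof (induction xs)
  case Nil then show ?case by simp
next
  case (Cons x xs)
  show ?case
  proof (cases xs)
    case Nil then show ?thesis using Cons by simp
  next
    case (Cons y r)
    show ?thesis
    proof (cases "x = y")
      case True then show ?thesis using Cons by (intro exI[of _ "[]"]) auto
    next
      case False
      then have "\<not> successively (\<noteq>) xs" using Cons \<open>\<not> successively (\<noteq>) (x # xs)\<close> by simp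
      then obtain ys v zs where h: "xs = ys @ [v, v] @ zs" "successively (\<noteq>) (ys @ [v])"
        using Cons.IH by blast
      have "hd (ys @ [v]) = y" using h(1) Cons by (cases ys) auto
      then have "successively (\<noteq>) (x # ys @ [v])" using h(2) False by (simp add: successively_Cons)
      then show ?thesis using h(1) by (intro exI[of _ "x # ys"] exI[of _ v] exI[of _ zs]) simp
    qed
  qed
qed

lemma pair_split:
  assumes "pairw (ys @ [v, v] @ zs)"
  shows "v \<notin> set ys" "v \<notin> set zs" "pairw (ys @ zs)"
proof -
  have c: "count_list (ys @ [v, v] @ zs) v = 2" using assms unfolding pairw_def by simp
  then show "v \<notin> set ys" "v \<notin> set zs" by (auto simp: count_list_0_iff[symmetric])
  show "pairw (ys @ zs)" unfolding pairw_def
  proof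
    fix w assume w: "w \<in> set (ys @ zs)"
    then have "w \<noteq> v" using \<open>v \<notin> set ys\<close> \<open>v \<notin> set zs\<close> by auto
    moreover have "count_list (ys @ [v, v] @ zs) w = 2" using assms w unfolding pairw_def by auto
    ultimately show "count_list (ys @ zs) w = 2" by simp
  qed
qed

lemma pos_v:
  assumes "v \<notin> set ys" "v \<notin> set zs" "q < length (ys @ [v, v] @ zs)"
  shows "(ys @ [v, v] @ zs) ! q = v \<longleftrightarrow> q = length ys \<or> q = Suc (length ys)"
proof -
  consider "q < length ys" | "q = length ys" | "q = Suc (length ys)" | "Suc (length ys) < q" by linarith
  then show ?thesis
  proof cases
    case 1 then show ?thesis using assms(1) by (auto simp: nth_append)
  next
    case 2 then show ?thesis by (simp add: nth_append)
  next
    case 3 then show ?thesis by (simp add: nth_append)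
  next
    case 4
    then have "(ys @ [v, v] @ zs) ! q = zs ! (q - Suc (Suc (length ys)))" by (simp add: nth_append)
    moreover have "q - Suc (Suc (length ys)) < length zs" using 4 assms(3) by simp
    ultimately show ?thesis using assms(2) 4 by (metis nth_mem less_not_refl3 Suc_lessD)
  qed
qed

lemma nth_del2:
  "q < length (ys @ zs) \<Longrightarrow> (ys @ zs) ! q = (ys @ [v, v] @ zs) ! (if q < length ys then q else q + 2)"
  by (auto simp: nth_append)

lemma NC_del2:
  assumes "v \<notin> set ys" "v \<notin> set zs"
  shows "NCw (ys @ [v, v] @ zs) \<longleftrightarrow> NCw (ys @ zs)"
proof
  let ?xs = "ys @ [v, v] @ zs" and ?ys = "ys @ zs"
  let ?i = "\<lambda>q. if q < length ys then q else q + 2"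
  assume nc: "NCw ?xs"
  show "NCw ?ys" unfolding NCw_def
  proof
    assume "\<exists>a b c d. a < b \<and> b < c \<and> c < d \<and> d < length ?ys \<and> ?ys ! a = ?ys ! c \<and> ?ys ! b = ?ys ! d \<and> ?ys ! a \<noteq> ?ys ! b"
    then obtain a b c d where h: "a < b" "b < c" "c < d" "d < length ?ys" "?ys ! a = ?ys ! c" "?ys ! b = ?ys ! d" "?ys ! a \<noteq> ?ys ! b"
      by blast
    have mono: "?i p < ?i q" if "p < q" for p q using that by auto
    have "?i a < ?i b" "?i b < ?i c" "?i c < ?i d" "?i d < length ?xs" using h mono by auto
    moreover have "?xs ! ?i a = ?xs ! ?i c" "?xs ! ?i b = ?xs ! ?i d" "?xs ! ?i a \<noteq> ?xs ! ?i b"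
      using h nth_del2[of _ ys zs v] by (metis less_trans)+
    ultimately show False using nc unfolding NCw_def by blast
  qed
next
  let ?xs = "ys @ [v, v] @ zs" and ?ys = "ys @ zs"
  let ?j = "\<lambda>q. if q < length ys then q else q - 2"
  assume nc: "NCw ?ys"
  show "NCw ?xs" unfolding NCw_def
  proof
    assume "\<exists>a b c d. a < b \<and> b < c \<and> c < d \<and> d < length ?xs \<and> ?xs ! a = ?xs ! c \<and> ?xs ! b = ?xs ! d \<and> ?xs ! a \<noteq> ?xs ! b"
    then obtain a b c d where h: "a < b" "b < c" "c < d" "d < length ?xs" "?xs ! a = ?xs ! c" "?xs ! b = ?xs ! d" "?xs ! a \<noteq> ?xs ! b"
      by blast
    have pv: "?xs ! q = v \<longleftrightarrow> q = length ys \<or> q = Suc (length ys)" if "q < length ?xs" for q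
      using pos_v[OF assms that] .
    have na: "?xs ! a \<noteq> v" using pv[of a] pv[of c] h by auto
    have nb: "?xs ! b \<noteq> v" using pv[of b] pv[of d] h by auto
    have out: "q \<noteq> length ys \<and> q \<noteq> Suc (length ys)" if "q < length ?xs" "?xs ! q \<noteq> v" for q
      using pv[OF that(1)] that(2) by auto
    have oa: "a \<noteq> length ys \<and> a \<noteq> Suc (length ys)" using out[of a] na h by auto
    have ob: "b \<noteq> length ys \<and> b \<noteq> Suc (length ys)" using out[of b] nb h by auto
    have oc: "c \<noteq> length ys \<and> c \<noteq> Suc (length ys)" using out[of c] na h by auto
    have od: "d \<noteq> length ys \<and> d \<noteq> Suc (length ys)" using out[of d] nb h by auto
    have bk: "?xs ! q = ?ys ! (?j q) \<and> ?j q < length ?ys" if "q < length ?xs" "q \<noteq> length ys \<and> q \<noteq> Suc (length ys)" for q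
      using that by (auto simp: nth_append)
    have mono: "?j p < ?j q" if "p < q" "p \<noteq> length ys \<and> p \<noteq> Suc (length ys)" "q \<noteq> length ys \<and> q \<noteq> Suc (length ys)" for p q
      using that by auto
    have "?j a < ?j b" "?j b < ?j c" "?j c < ?j d" "?j d < length ?ys"
      using mono oa ob oc od h bk[of d] by auto
    moreover have "?ys ! ?j a = ?ys ! ?j c" "?ys ! ?j b = ?ys ! ?j d" "?ys ! ?j a \<noteq> ?ys ! ?j b"
      using h bk[of a] bk[of b] bk[of c] bk[of d] oa ob oc od by auto
    ultimately show False using nc unfolding NCw_def by blast
  qed
qed

lemma count_distinct: "distinct t \<Longrightarrow> x \<in> set t \<Longrightarrow> count_list t x = 1"
  by (induction t) auto

lemma Fp_distinct: "distinct t \<Longrightarrow> Fp t = t"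
  unfolding Fp_def by (rule filter_True) (simp add: count_distinct)

lemma Fp_del2:
  assumes "v \<notin> set ys" "v \<notin> set zs"
  shows "Fp (ys @ [v, v] @ zs) = Fp (ys @ zs)"
proof -
  have e: "count_list (ys @ [v, v] @ zs) x = count_list (ys @ zs) x" if "x \<noteq> v" for x
    using that by simp
  have "Fp (ys @ [v, v] @ zs) = filter (\<lambda>x. count_list (ys @ [v, v] @ zs) x = 1) ys @
     filter (\<lambda>x. count_list (ys @ [v, v] @ zs) x = 1) [v, v] @ filter (\<lambda>x. count_list (ys @ [v, v] @ zs) x = 1) zs"
    by (simp add: Fp_def)
  also have "filter (\<lambda>x. count_list (ys @ [v, v] @ zs) x = 1) [v, v] = []" by simp
  also have "filter (\<lambda>x. count_list (ys @ [v, v] @ zs) x = 1) ys = filter (\<lambda>x. count_list (ys @ zs) x = 1) ys"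
    using assms(1) e by (intro filter_cong) auto
  also have "filter (\<lambda>x. count_list (ys @ [v, v] @ zs) x = 1) zs = filter (\<lambda>x. count_list (ys @ zs) x = 1) zs"
    using assms(2) e by (intro filter_cong) auto
  finally show ?thesis by (simp add: Fp_def)
qed

lemma VM_del2:
  assumes d: "distinct ys" and v: "v \<notin> set ys" "v \<notin> set zs"
  shows "VMw (ys @ [v, v] @ zs) \<longleftrightarrow> vseq (ys @ [v]) \<and> VMw (ys @ zs)"
proof -
  let ?xs = "ys @ [v, v] @ zs" and ?ys = "ys @ zs" and ?j = "length ys"
  have T1: "take (Suc p) ?xs = take (Suc p) ?ys" if "p < ?j" for p using that by simp
  have T2: "take (Suc ?j) ?xs = ys @ [v]" by simp
  have T3: "take (Suc (Suc ?j)) ?xs = ys @ [v, v] @ []" by simp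
  have T4: "take (Suc (Suc (Suc (?j + q)))) ?xs = ys @ [v, v] @ take (Suc q) zs" for q
  proof -
    have "take (Suc (Suc (Suc (?j + q)))) ?xs = ys @ take (Suc (Suc (Suc q))) ([v, v] @ zs)"
      by (simp add: take_append numeral_3_eq_3)
    also have "take (Suc (Suc (Suc q))) ([v, v] @ zs) = [v, v] @ take (Suc q) zs"
      by (simp only: take_Suc_Cons append_Cons append_Nil)
    finally show ?thesis .
  qed
  have T4': "take (Suc (?j + q)) ?ys = ys @ take (Suc q) zs" for q by simp
  have F2: "Fp (ys @ [v]) = ys @ [v]" using d v by (simp add: Fp_distinct)
  have F3: "Fp (ys @ [v, v] @ []) = ys" using Fp_del2[OF v(1), of "[]"] d by (simp add: Fp_distinct)
  have F4: "Fp (ys @ [v, v] @ take (Suc q) zs) = Fp (ys @ take (Suc q) zs)" for q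
    using Fp_del2[OF v(1), of "take (Suc q) zs"] v(2) by (meson in_set_takeD)
  show ?thesis
  proof
    assume vm: "VMw ?xs"
    have "?j < length ?xs" by simp
    then have "vok (Fp (take (Suc ?j) ?xs))" using vm unfolding VMw_def by blast
    then have vs: "vseq (ys @ [v])" using T2 F2 by (simp add: vok_def)
    have "vok (Fp (take (Suc p) ?ys))" if p: "p < length ?ys" for p
    proof (cases "p < ?j")
      case True
      have "p < length ?xs" using True by simp
      then have "vok (Fp (take (Suc p) ?xs))" using vm unfolding VMw_def by blast
      then show ?thesis using T1[OF True] by simp
    next
      case False
      define q where "q = p - ?j"
      have q: "p = ?j + q" "q < length zs" using p False unfolding q_def by auto
      have "Suc (Suc (?j + q)) < length ?xs" using q by simp
      then have "vok (Fp (take (Suc (Suc (Suc (?j + q)))) ?xs))" using vm unfolding VMw_def by blast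
      then show ?thesis using q T4 T4' F4 by simp
    qed
    then show "vseq (ys @ [v]) \<and> VMw ?ys" using vs unfolding VMw_def by blast
  next
    assume h: "vseq (ys @ [v]) \<and> VMw ?ys"
    have vys: "vok ys"
    proof (cases "ys = []")
      case True then show ?thesis by (simp add: vok_def)
    next
      case False
      have "take ?j (ys @ [v]) = ys" by simp
      then show ?thesis using vseq_take[of "ys @ [v]" ?j] h False by (simp add: vok_def)
    qed
    show "VMw ?xs" unfolding VMw_def
    proof (intro allI impI)
      fix p assume p: "p < length ?xs"
      have "p < ?j \<or> p = ?j \<or> p = Suc ?j \<or> Suc (Suc ?j) \<le> p" by linarith
      then consider "p < ?j" | "p = ?j" | "p = Suc ?j" | q where "p = Suc (Suc (?j + q))" "q < length zs"
      proof (elim disjE)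
        assume le: "Suc (Suc ?j) \<le> p"
        assume th: "\<And>q. p = Suc (Suc (?j + q)) \<Longrightarrow> q < length zs \<Longrightarrow> thesis"
        define q where "q = p - Suc (Suc ?j)"
        have "p = Suc (Suc (?j + q))" using le unfolding q_def by simp
        moreover have "q < length zs" using le p unfolding q_def by simp
        ultimately show thesis by (rule th)
      qed auto
      then show "vok (Fp (take (Suc p) ?xs))"
      proof cases
        case 1
        have "p < length ?ys" using 1 by simp
        then have "vok (Fp (take (Suc p) ?ys))" using h unfolding VMw_def by blast
        then show ?thesis using T1[OF 1] by simp
      next
        case 2 then show ?thesis using h T2 F2 by (simp add: vok_def)
      next
        case 3 then show ?thesis using vys T3 F3 by simp
      next
        case 4
        have "?j + q < length ?ys" using 4 by simp
        then have "vok (Fp (take (Suc (?j + q)) ?ys))" using h unfolding VMw_def by blast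
        then show ?thesis using 4 T4 T4' F4 by simp
      qed
    qed
  qed
qed


context vsetup begin

definition Xw :: "nat list \<Rightarrow> wd" where "Xw w = map (\<lambda>i. (i, X)) w"

definition M :: "nat list \<Rightarrow> complex" where "M w = \<phi> (prod_list (map a w))"

lemma Xw_fst[simp]: "map fst (Xw w) = w" by (induction w) (simp_all add: Xw_def)
lemma Xw_append[simp]: "Xw (v @ w) = Xw v @ Xw w" by (simp add: Xw_def)
lemma Xw_len[simp]: "length (Xw w) = length w" by (simp add: Xw_def)

lemma P_Xw: "set w \<subseteq> {1..} \<Longrightarrow> P (Xw w) = prod_list (map a w)"
  by (induction w) (auto simp: Xw_def P_Cons evp_def ev_X)

lemma M_single: assumes "set w \<subseteq> {1..}" "count_list w i = 1" shows "M w = 0"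
proof -
  have "i \<in> set w" using assms(2) by (metis count_notin zero_neq_one)
  then have "(i, X) \<in> set (Xw w)" by (auto simp: Xw_def)
  then have "\<phi> (P (Xw w)) = 0" using singleton_zero[of "Xw w" i X] assms cc_X by simp
  then show ?thesis using P_Xw[OF assms(1)] by (simp add: M_def)
qed

lemma M_inv:
  assumes "set w \<subseteq> {1..}" "strict_mono_on (set w) f" "f ` set w \<subseteq> {1..}"
  shows "M (map f w) = M w"
proof -
  have e: "map (apfst f) (Xw w) = Xw (map f w)" by (simp add: Xw_def)
  have s: "set (map f w) \<subseteq> {1..}" using assms(3) by auto
  have "\<phi> (P (map (apfst f) (Xw w))) = \<phi> (P (Xw w))" using invariance[of "Xw w" f] assms by simp
  then show ?thesis using P_Xw[OF assms(1)] P_Xw[OF s] e by (simp add: M_def)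
qed

lemma M_Nil: "M [] = 1" by (simp add: M_def)

lemma M_pair:
  "set xs \<subseteq> {1..} \<Longrightarrow> pairw xs \<Longrightarrow> M xs = (if NCw xs \<and> VMw xs then 1 else 0)"
proof (induction "length xs" arbitrary: xs rule: less_induct)
  case less
  show ?case
  proof (cases "xs = []")
    case True
    then show ?thesis by (simp add: M_Nil NCw_def VMw_def)
  next
    case ne: False
    show ?thesis
    proof (cases "successively (\<noteq>) xs")
      case True
      have "\<phi> (P (Xw xs)) = 0"
      proof (rule CL0)
        show "successively (\<noteq>) (map fst (Xw xs))" using True by simp
        show "set (map fst (Xw xs)) \<subseteq> {1..}" using less(2) by simp
        show "Xw xs \<noteq> []" using ne by (simp add: Xw_def)
        show "\<forall>k<length (Xw xs). cc (snd (Xw xs ! k)) = 0" by (simp add: Xw_def cc_X)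
      qed
      then have "M xs = 0" using P_Xw[OF less(2)] by (simp add: M_def)
      moreover have "\<not> NCw xs" using NC_not_succ[OF _ less(3) ne True] by blast
      ultimately show ?thesis by simp
    next
      case False
      then obtain ys v zs where xs: "xs = ys @ [v, v] @ zs" and sy: "successively (\<noteq>) (ys @ [v])"
        using first_adj by blast
      have vy: "v \<notin> set ys" and vz: "v \<notin> set zs" and pr: "pairw (ys @ zs)"
        using pair_split less(3) xs by auto
      have v1: "v \<ge> 1" using less(2) xs by auto
      have sys: "set ys \<subseteq> {1..}" "set zs \<subseteq> {1..}" using less(2) xs by auto
      have syz: "set (ys @ zs) \<subseteq> {1..}" using sys by auto
      have IH: "M (ys @ zs) = (if NCw (ys @ zs) \<and> VMw (ys @ zs) then 1 else 0)"
        using less(1)[OF _ syz pr] xs by simp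
      let ?A = "Xw ys" and ?B = "Xw zs"
      have "prod_list (map a xs) = P ?A * ev v (X * X) * P ?B"
        using xs P_Xw sys v1 by (simp add: ev_X2 power2_eq_square mult.assoc)
      also have "ev v (X * X) = ev v (X * X - 1) + ev v 1" by (simp add: ev_diff)
      finally have "prod_list (map a xs) = P (?A @ [(v, X * X - 1)] @ ?B) + P (?A @ [(v, 1)] @ ?B)"
        by (simp add: P_append P_Cons evp_def distrib_left distrib_right mult.assoc)
      then have Mx: "M xs = \<phi> (P (?A @ [(v, X * X - 1)] @ ?B)) + \<phi> (P (?A @ [(v, 1)] @ ?B))"
        by (simp add: M_def phi_add)
      have t1: "\<phi> (P (?A @ [(v, X * X - 1)] @ ?B)) = 0"
      proof (rule singleton_zero[of _ v "X * X - 1"])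
        show "set (map fst (?A @ [(v, X * X - 1)] @ ?B)) \<subseteq> {1..}" using sys v1 by auto
        show "(v, X * X - 1) \<in> set (?A @ [(v, X * X - 1)] @ ?B)" by simp
        show "count_list (map fst (?A @ [(v, X * X - 1)] @ ?B)) v = 1" using vy vz by simp
        show "cc (X * X - 1) = 0" by (rule cc_X2m1)
      qed
      let ?W = "?A @ (v, 1) # mrg ?B"
      have PW: "P ?W = P (?A @ [(v, 1)] @ ?B)" using P_mrg[of ?B] sys by (simp add: P_append P_Cons)
      have sW: "set (map fst ?W) \<subseteq> {1..}" using sys v1 mrg_set[of ?B] by auto
      have succW: "successively (\<noteq>) (map fst ?W)"
      proof -
        have "successively (\<noteq>) (ys @ [v])" by (rule sy)
        moreover have "successively (\<noteq>) (v # map fst (mrg ?B))"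
        proof (cases "zs = []")
          case True then show ?thesis by (simp add: Xw_def)
        next
          case False
          have "mrg ?B \<noteq> [] \<and> fst (hd (mrg ?B)) = fst (hd ?B)" using mrg_hd[of ?B] False by (simp add: Xw_def)
          moreover have "fst (hd ?B) = hd zs" using False by (simp add: Xw_def hd_map)
          moreover have "hd zs \<noteq> v" using vz False by (metis hd_in_set)
          ultimately show ?thesis using mrg_succ[of ?B] by (simp add: successively_Cons hd_map)
        qed
        ultimately show ?thesis by (simp add: successively_append_iff)
      qed
      let ?j = "length ys"
      have jW: "?j < length ?W" by simp
      have Wj: "?W ! ?j = (v, 1)" by (simp add: nth_append)
      have cW: "\<forall>k<?j. cc (snd (?W ! k)) = 0" by (simp add: nth_append Xw_def cc_X)
      have upd: "?W[?j := (fst (?W ! ?j), 1)] = ?W"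
      proof -
        have "?W[?j := (fst (?W ! ?j), 1)] = ?W[?j := ?W ! ?j]" using Wj by simp
        then show ?thesis by (simp only: list_update_id)
      qed
      have tk: "take (Suc ?j) (map fst ?W) = ys @ [v]" by simp
      have rm: "take ?j ?W @ drop (Suc ?j) ?W = ?A @ mrg ?B" by simp
      have "\<phi> (P ?W) = (if vseq (ys @ [v]) then \<phi> (P (?A @ mrg ?B)) else 0)"
        using CL[OF succW sW jW cW] unfolding upd tk rm .
      moreover have "\<phi> (P (?A @ mrg ?B)) = M (ys @ zs)"
        using P_mrg[of ?B] sys P_Xw[OF syz] by (simp add: P_append M_def)
      ultimately have t2: "\<phi> (P (?A @ [(v, 1)] @ ?B)) = (if vseq (ys @ [v]) then M (ys @ zs) else 0)"
        using PW by simp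
      have Mx2: "M xs = (if vseq (ys @ [v]) then M (ys @ zs) else 0)" using Mx t1 t2 by simp
      show ?thesis
      proof (cases "NCw xs")
        case False
        then have "\<not> NCw (ys @ zs)" using NC_del2[OF vy vz] xs by simp
        then show ?thesis using Mx2 IH False by simp
      next
        case True
        have nc: "NCw (ys @ zs)" using NC_del2[OF vy vz] xs True by simp
        have "successively (\<noteq>) (take ?j xs)" using sy xs by (simp add: successively_append_iff)
        moreover have "?j \<le> length xs" using xs by simp
        ultimately have "distinct (take ?j xs)" using NC_distinct_prefix[OF True less(3)] by blast
        then have dy: "distinct ys" using xs by simp
        have "VMw xs \<longleftrightarrow> vseq (ys @ [v]) \<and> VMw (ys @ zs)" using VM_del2[OF dy vy vz] xs by simp
        then show ?thesis using Mx2 IH True nc by simp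
      qed
    qed
  qed
qed

end


declare upt_Suc[simp del]

definition pos :: "nat list \<Rightarrow> nat \<Rightarrow> nat set" where
  "pos s x = {q. q < length s \<and> s ! q = x}"
definition fo :: "nat list \<Rightarrow> nat \<Rightarrow> nat" where "fo s x = Min (pos s x)"
definition lo :: "nat list \<Rightarrow> nat \<Rightarrow> nat" where "lo s x = Max (pos s x)"

lemma card_pos: "card (pos s x) = count_list s x"
  unfolding pos_def count_list_eq_length_filter length_filter_conv_card by (simp add: eq_commute)

lemma pos2:
  assumes "pairw s" "x \<in> set s"
  shows "pos s x = {fo s x, lo s x}" "fo s x < lo s x"
proof -
  have "card (pos s x) = 2" using assms card_pos unfolding pairw_def by simp
  then obtain a b where ab: "pos s x = {a, b}" "a \<noteq> b" unfolding card_2_iff by blast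
  then show "pos s x = {fo s x, lo s x}" "fo s x < lo s x" unfolding fo_def lo_def
    by (auto simp: min_def max_def)
qed

lemma pos_iff:
  assumes "pairw s" "x \<in> set s" "q < length s"
  shows "s ! q = x \<longleftrightarrow> q = fo s x \<or> q = lo s x"
  using pos2[OF assms(1,2)] assms(3) unfolding pos_def by blast

lemma fo_lo_props:
  assumes "pairw s" "x \<in> set s"
  shows "fo s x < length s" "lo s x < length s" "s ! fo s x = x" "s ! lo s x = x"
  using pos2[OF assms] unfolding pos_def by blast+

lemma count_prefix:
  assumes "p < length s"
  shows "count_list (take (Suc p) s) x = card (pos s x \<inter> {..p})"
proof -
  have "count_list (take (Suc p) s) x = card {i. i < length (take (Suc p) s) \<and> x = take (Suc p) s ! i}"
    unfolding count_list_eq_length_filter length_filter_conv_card by simp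
  also have "{i. i < length (take (Suc p) s) \<and> x = take (Suc p) s ! i} = pos s x \<inter> {..p}"
    using assms unfolding pos_def by auto
  finally show ?thesis .
qed

lemma count_prefix_1:
  assumes "pairw s" "q \<le> p" "p < length s"
  shows "count_list (take (Suc p) s) (s ! q) = 1 \<longleftrightarrow> q = fo s (s ! q) \<and> p < lo s (s ! q)"
proof -
  let ?x = "s ! q"
  have x: "?x \<in> set s" using assms by auto
  note P = pos2[OF assms(1) x]
  have "q < length s" using assms by simp
  then have q: "q = fo s ?x \<or> q = lo s ?x" using pos_iff[OF assms(1) x, of q] by simp
  have c: "count_list (take (Suc p) s) ?x = card ({fo s ?x, lo s ?x} \<inter> {..p})"
    using count_prefix[OF assms(3)] P(1) by simp
  show ?thesis
  proof (cases "lo s ?x \<le> p")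
    case True
    then have "{fo s ?x, lo s ?x} \<inter> {..p} = {fo s ?x, lo s ?x}" using P(2) by auto
    then show ?thesis using c P(2) True by auto
  next
    case False
    then have "{fo s ?x, lo s ?x} \<inter> {..p} = {fo s ?x}" using P(2) q assms(2) by auto
    then show ?thesis using c False q assms(2) by auto
  qed
qed

lemma Fp_form:
  assumes "pairw s" "p < length s"
  shows "Fp (take (Suc p) s) = map ((!) s) (filter (\<lambda>q. q = fo s (s ! q) \<and> p < lo s (s ! q)) [0..<Suc p])"
proof -
  have t: "take (Suc p) s = map ((!) s) [0..<Suc p]"
    using assms(2) by (intro nth_equalityI) (auto simp del: upt_Suc)
  have "Fp (take (Suc p) s) = filter (\<lambda>x. count_list (take (Suc p) s) x = 1) (map ((!) s) [0..<Suc p])"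
    unfolding Fp_def by (subst (2) t) (rule refl)
  also have "\<dots> = map ((!) s) (filter (\<lambda>q. count_list (take (Suc p) s) (s ! q) = 1) [0..<Suc p])"
    by (simp add: filter_map comp_def)
  also have "filter (\<lambda>q. count_list (take (Suc p) s) (s ! q) = 1) [0..<Suc p]
           = filter (\<lambda>q. q = fo s (s ! q) \<and> p < lo s (s ! q)) [0..<Suc p]"
    using count_prefix_1[OF assms(1) _ assms(2)] by (intro filter_cong) auto
  finally show ?thesis .
qed

definition encl :: "nat list \<Rightarrow> nat \<Rightarrow> nat \<Rightarrow> bool" where
  "encl s w v \<longleftrightarrow> fo s w < fo s v \<and> lo s v < lo s w"
definition nearw :: "nat list \<Rightarrow> nat \<Rightarrow> nat \<Rightarrow> bool" where
  "nearw s w v \<longleftrightarrow> encl s w v \<and> \<not> (\<exists>x\<in>set s. encl s w x \<and> encl s x v)"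
definition VMc :: "nat list \<Rightarrow> bool" where
  "VMc s \<longleftrightarrow> (\<forall>vs. vs \<noteq> [] \<and> set vs \<subseteq> set s \<and> (\<forall>k. Suc k < length vs \<longrightarrow> nearw s (vs ! Suc k) (vs ! k)) \<longrightarrow> vseq vs)"

lemma NC_nest:
  assumes "NCw s" "pairw s" "a \<in> set s" "b \<in> set s" "a \<noteq> b" "fo s a < fo s b" "fo s b < lo s a"
  shows "lo s b < lo s a"
proof (rule ccontr)
  assume "\<not> ?thesis"
  moreover have "lo s b \<noteq> lo s a" using fo_lo_props[OF assms(2,3)] fo_lo_props[OF assms(2,4)] assms(5) by metis
  ultimately have "lo s a < lo s b" by simp
  then have "fo s a < fo s b \<and> fo s b < lo s a \<and> lo s a < lo s b \<and> lo s b < length s \<and>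
     s ! fo s a = s ! lo s a \<and> s ! fo s b = s ! lo s b \<and> s ! fo s a \<noteq> s ! fo s b"
    using assms fo_lo_props[OF assms(2,3)] fo_lo_props[OF assms(2,4)] by simp
  then show False using assms(1) unfolding NCw_def by blast
qed

lemma L_set:
  assumes "pairw s" "p < length s"
  shows "x \<in> set (Fp (take (Suc p) s)) \<longleftrightarrow> x \<in> set s \<and> fo s x \<le> p \<and> p < lo s x"
proof
  assume "x \<in> set (Fp (take (Suc p) s))"
  then obtain q where q: "q < Suc p" "q = fo s (s ! q)" "p < lo s (s ! q)" "x = s ! q"
    unfolding Fp_form[OF assms] by auto
  then show "x \<in> set s \<and> fo s x \<le> p \<and> p < lo s x" using assms(2) by auto
next
  assume h: "x \<in> set s \<and> fo s x \<le> p \<and> p < lo s x"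
  then have "s ! fo s x = x" using fo_lo_props[OF assms(1)] by blast
  then show "x \<in> set (Fp (take (Suc p) s))" unfolding Fp_form[OF assms] using h
    by (auto intro!: image_eqI[of _ _ "fo s x"])
qed

lemma L_sorted:
  assumes "pairw s" "p < length s"
  shows "sorted_wrt (\<lambda>x y. fo s x < fo s y) (Fp (take (Suc p) s))"
proof -
  let ?Q = "filter (\<lambda>q. q = fo s (s ! q) \<and> p < lo s (s ! q)) [0..<Suc p]"
  have "sorted_wrt (<) ?Q" by (rule sorted_wrt_filter) (rule sorted_wrt_upt)
  then have "sorted_wrt (\<lambda>q q'. fo s (s ! q) < fo s (s ! q')) ?Q"
  proof (rule sorted_wrt_mono_rel[rotated])
    fix x y assume "x \<in> set ?Q" "y \<in> set ?Q" "x < y"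
    then show "fo s (s ! x) < fo s (s ! y)" by auto
  qed
  then show ?thesis unfolding Fp_form[OF assms] by (simp add: sorted_wrt_map)
qed

lemma L_nth_less:
  assumes "pairw s" "p < length s" "i < length (Fp (take (Suc p) s))" "j < length (Fp (take (Suc p) s))"
  shows "fo s (Fp (take (Suc p) s) ! i) < fo s (Fp (take (Suc p) s) ! j) \<longleftrightarrow> i < j"
proof -
  let ?L = "Fp (take (Suc p) s)"
  have S: "\<And>i j. i < j \<Longrightarrow> j < length ?L \<Longrightarrow> fo s (?L ! i) < fo s (?L ! j)"
    using L_sorted[OF assms(1,2)] unfolding sorted_wrt_iff_nth_less by blast
  show ?thesis
  proof
    assume "fo s (?L ! i) < fo s (?L ! j)"
    then show "i < j" using S[of j i] assms(3) by (metis less_asym' nat_neq_iff)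
  qed (use S assms in auto)
qed

lemma near_consec:
  assumes "NCw s" "pairw s" "p < length s" "Suc i < length (Fp (take (Suc p) s))"
  shows "nearw s (Fp (take (Suc p) s) ! i) (Fp (take (Suc p) s) ! Suc i)"
proof -
  let ?L = "Fp (take (Suc p) s)"
  let ?a = "?L ! i" and ?b = "?L ! Suc i"
  have ain: "?a \<in> set ?L" "?b \<in> set ?L" using assms(4) by auto
  note La = L_set[OF assms(2,3), THEN iffD1, OF ain(1)]
  note Lb = L_set[OF assms(2,3), THEN iffD1, OF ain(2)]
  have fab: "fo s ?a < fo s ?b" using L_nth_less[OF assms(2,3), of i "Suc i"] assms(4) by simp
  have ne: "?a \<noteq> ?b" using fab by auto
  have lab: "lo s ?b < lo s ?a" using NC_nest[OF assms(1,2)] La Lb ne fab by simp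
  have enc: "encl s ?a ?b" unfolding encl_def using fab lab by simp
  have "\<not> (\<exists>x\<in>set s. encl s ?a x \<and> encl s x ?b)"
  proof
    assume "\<exists>x\<in>set s. encl s ?a x \<and> encl s x ?b"
    then obtain x where x: "x \<in> set s" "encl s ?a x" "encl s x ?b" by blast
    have "fo s x \<le> p" "p < lo s x" using x Lb unfolding encl_def by auto
    then have "x \<in> set ?L" using L_set[OF assms(2,3)] x(1) by blast
    then obtain m where m: "m < length ?L" "?L ! m = x" by (metis in_set_conv_nth)
    have "i < m" using L_nth_less[OF assms(2,3), of i m] x(2) m assms(4) unfolding encl_def by simp
    moreover have "m < Suc i" using L_nth_less[OF assms(2,3), of m "Suc i"] x(3) m assms(4) unfolding encl_def by simp
    ultimately show False by simp
  qed
  then show ?thesis using enc unfolding nearw_def by simp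
qed

lemma VMc_imp_VMw:
  assumes "NCw s" "pairw s" "VMc s"
  shows "VMw s"
  unfolding VMw_def
proof (intro allI impI)
  fix p assume p: "p < length s"
  let ?L = "Fp (take (Suc p) s)"
  show "vok ?L"
  proof (cases "?L = []")
    case True then show ?thesis by (simp add: vok_def)
  next
    case False
    have c1: "rev ?L \<noteq> []" using False by simp
    have c2: "set (rev ?L) \<subseteq> set s" using L_set[OF assms(2) p] by auto
    have c3: "\<forall>k. Suc k < length (rev ?L) \<longrightarrow> nearw s (rev ?L ! Suc k) (rev ?L ! k)"
    proof (intro allI impI)
      fix k assume k: "Suc k < length (rev ?L)"
      let ?i = "length ?L - Suc (Suc k)"
      have e1: "rev ?L ! Suc k = ?L ! ?i" using k by (simp add: rev_nth)
      have e2: "rev ?L ! k = ?L ! Suc ?i" using k by (simp add: rev_nth Suc_diff_Suc)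
      have "Suc ?i < length ?L" using k by simp
      then show "nearw s (rev ?L ! Suc k) (rev ?L ! k)" unfolding e1 e2 by (rule near_consec[OF assms(1,2) p])
    qed
    have "vseq (rev ?L)" using assms(3) c1 c2 c3 unfolding VMc_def by blast
    then show ?thesis by (simp add: vok_def vseq_rev_iff)
  qed
qed

lemma VMw_imp_VMc:
  assumes NC: "NCw s" and pw: "pairw s" and vm: "VMw s"
  shows "VMc s"
  unfolding VMc_def
proof (intro allI impI, elim conjE)
  fix vs assume ne: "vs \<noteq> []" and sub: "set vs \<subseteq> set s"
    and ch: "\<forall>k. Suc k < length vs \<longrightarrow> nearw s (vs ! Suc k) (vs ! k)"
  let ?n = "length vs"
  let ?p = "fo s (vs ! 0)"
  have v0: "vs ! 0 \<in> set s" using ne sub by auto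
  have p: "?p < length s" using fo_lo_props[OF pw v0] by simp
  let ?L = "Fp (take (Suc ?p) s)"
  have inL: "vs ! k \<in> set ?L \<and> fo s (vs ! k) \<le> ?p \<and> lo s (vs ! 0) \<le> lo s (vs ! k)" if "k < ?n" for k
    using that
  proof (induction k)
    case 0
    then show ?case using L_set[OF pw p] v0 pos2[OF pw v0] by simp
  next
    case (Suc k)
    have e: "encl s (vs ! Suc k) (vs ! k)" using ch Suc(2) unfolding nearw_def by blast
    have IH: "vs ! k \<in> set ?L \<and> fo s (vs ! k) \<le> ?p \<and> lo s (vs ! 0) \<le> lo s (vs ! k)" using Suc by simp
    have m: "vs ! Suc k \<in> set s" using Suc(2) sub by auto
    have "fo s (vs ! Suc k) \<le> ?p" "lo s (vs ! 0) \<le> lo s (vs ! Suc k)" using e IH unfolding encl_def by auto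
    moreover have "?p < lo s (vs ! 0)" using pos2[OF pw v0] by simp
    ultimately show ?case using L_set[OF pw p] m by simp
  qed
  have "\<forall>k<?n. \<exists>m<length ?L. ?L ! m = vs ! k" using inL by (metis in_set_conv_nth)
  then obtain g where g: "\<And>k. k < ?n \<Longrightarrow> g k < length ?L \<and> ?L ! (g k) = vs ! k" by metis
  have step: "Suc (g (Suc k)) = g k" if k: "Suc k < ?n" for k
  proof -
    let ?a = "vs ! Suc k" and ?b = "vs ! k"
    have nw: "nearw s ?a ?b" using ch k by blast
    then have e: "encl s ?a ?b" unfolding nearw_def by blast
    have ga: "g (Suc k) < length ?L" "?L ! g (Suc k) = ?a" using g k by auto
    have gb: "g k < length ?L" "?L ! g k = ?b" using g k by auto
    have lt: "g (Suc k) < g k" using L_nth_less[OF pw p ga(1) gb(1)] e ga gb unfolding encl_def by simp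
    show ?thesis
    proof (rule ccontr)
      assume "Suc (g (Suc k)) \<noteq> g k"
      then have lt2: "Suc (g (Suc k)) < g k" using lt by simp
      let ?x = "?L ! Suc (g (Suc k))"
      have xl: "Suc (g (Suc k)) < length ?L" using lt2 gb by simp
      have xin: "?x \<in> set ?L" using xl by simp
      have xs: "?x \<in> set s" "fo s ?x \<le> ?p" "?p < lo s ?x" using L_set[OF pw p] xin by auto
      have f1: "fo s ?a < fo s ?x" using L_nth_less[OF pw p ga(1) xl] ga by simp
      have f2: "fo s ?x < fo s ?b" using L_nth_less[OF pw p xl gb(1)] gb lt2 by simp
      have ain: "?a \<in> set ?L" "?b \<in> set ?L" using inL k by auto
      have as: "?a \<in> set s" "fo s ?a \<le> ?p" "?p < lo s ?a" using L_set[OF pw p] ain(1) by auto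
      have bs: "?b \<in> set s" "fo s ?b \<le> ?p" "?p < lo s ?b" using L_set[OF pw p] ain(2) by auto
      have "lo s ?x < lo s ?a" using NC_nest[OF NC pw as(1) xs(1) _ f1] f1 xs as by fastforce
      then have e1: "encl s ?a ?x" using f1 unfolding encl_def by simp
      have "lo s ?b < lo s ?x" using NC_nest[OF NC pw xs(1) bs(1) _ f2] f2 xs bs by fastforce
      then have e2: "encl s ?x ?b" using f2 unfolding encl_def by simp
      show False using nw e1 e2 xs(1) unfolding nearw_def by blast
    qed
  qed
  have gk: "g k + k = g 0" if "k < ?n" for k
    using that
  proof (induction k)
    case 0 then show ?case by simp
  next
    case (Suc k) then show ?case using step[of k] by simp
  qed
  have g0: "g 0 < length ?L" using g ne by auto
  have n1: "?n - 1 \<le> g 0" using gk[of "?n - 1"] ne by simp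
  let ?d = "g 0 - (?n - 1)"
  have R: "rev vs = take ?n (drop ?d ?L)"
  proof (rule nth_equalityI)
    show "length (rev vs) = length (take ?n (drop ?d ?L))" using g0 n1 by simp
  next
    fix i assume i: "i < length (rev vs)"
    have "rev vs ! i = vs ! (?n - 1 - i)" using i by (simp add: rev_nth)
    also have "\<dots> = ?L ! g (?n - 1 - i)" using g[of "?n - 1 - i"] i by simp
    also have "g (?n - 1 - i) = ?d + i"
    proof -
      have h: "g (?n - 1 - i) + (?n - 1 - i) = g 0" using gk[of "?n - 1 - i"] i by simp
      show ?thesis using h i n1 by simp
    qed
    also have "?L ! (?d + i) = take ?n (drop ?d ?L) ! i" using i g0 n1 by simp
    finally show "rev vs ! i = take ?n (drop ?d ?L) ! i" .
  qed
  have "?L \<noteq> []" using g0 by auto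
  then have "vseq ?L" using vm p unfolding VMw_def vok_def by blast
  then have "vseq (rev vs)" unfolding R by (rule vseq_infix) (use R ne in \<open>metis Nil_is_rev_conv\<close>)
  then show "vseq vs" by (simp add: vseq_rev_iff)
qed

lemma VMw_iff_VMc: "NCw s \<Longrightarrow> pairw s \<Longrightarrow> VMw s \<longleftrightarrow> VMc s"
  using VMw_imp_VMc VMc_imp_VMw by blast


definition blk :: "nat list \<Rightarrow> nat \<Rightarrow> nat set" where "blk s x = Suc ` pos s x"
definition fsl :: "nat list \<Rightarrow> nat set \<Rightarrow> nat" where
  "fsl s = restrict (\<lambda>B. s ! (Min B - 1)) (blk s ` set s)"

lemma blk_eq: "pairw s \<Longrightarrow> x \<in> set s \<Longrightarrow> blk s x = {Suc (fo s x), Suc (lo s x)}"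
  unfolding blk_def using pos2 by simp

lemma blk_mem: "Suc q \<in> blk s x \<longleftrightarrow> q < length s \<and> s ! q = x"
  unfolding blk_def pos_def by auto

lemma blk_inj: "pairw s \<Longrightarrow> x \<in> set s \<Longrightarrow> blk s x = blk s y \<Longrightarrow> x = y"
  using blk_eq blk_mem fo_lo_props by (metis insertI1)

lemma fsl_blk: assumes "pairw s" "x \<in> set s" shows "fsl s (blk s x) = x"
proof -
  have "Min (blk s x) = Suc (fo s x)" using blk_eq[OF assms] pos2[OF assms] by simp
  then show ?thesis using assms fo_lo_props[OF assms] unfolding fsl_def by simp
qed

lemma block_lt_pair:
  assumes "P < P'" "Q < Q'"
  shows "block_lt {P, P'} {Q, Q'} \<longleftrightarrow> P < Q \<and> Q' < P'"
proof
  assume "block_lt {P, P'} {Q, Q'}"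
  then obtain p p' where h: "p \<in> {P, P'}" "p' \<in> {P, P'}" "p < p'" "\<forall>k\<in>{Q, Q'}. p < k \<and> k < p'"
    unfolding block_lt_def by blast
  then have "p = P" "p' = P'" using assms by auto
  then show "P < Q \<and> Q' < P'" using h(4) by auto
next
  assume "P < Q \<and> Q' < P'"
  then show "block_lt {P, P'} {Q, Q'}" unfolding block_lt_def using assms
    by (intro exI[of _ P] exI[of _ P']) auto
qed

lemma block_lt_blk:
  assumes "pairw s" "w \<in> set s" "v \<in> set s"
  shows "block_lt (blk s w) (blk s v) \<longleftrightarrow> encl s w v"
  unfolding blk_eq[OF assms(1,2)] blk_eq[OF assms(1,3)] encl_def
  using block_lt_pair[of "Suc (fo s w)" "Suc (lo s w)" "Suc (fo s v)" "Suc (lo s v)"]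
    pos2[OF assms(1,2)] pos2[OF assms(1,3)] by simp

lemma nearest_blk:
  assumes "pairw s" "w \<in> set s" "v \<in> set s"
  shows "nearest_outer (blk s ` set s) (blk s w) (blk s v) \<longleftrightarrow> nearw s w v"
  unfolding nearest_outer_def nearw_def using block_lt_blk[OF assms(1)] assms by auto

lemma vmono_iff:
  assumes pw: "pairw s"
  shows "vmono_labeling (blk s ` set s) (fsl s) \<longleftrightarrow> VMc s"
proof
  assume vm: "vmono_labeling (blk s ` set s) (fsl s)"
  show "VMc s" unfolding VMc_def
  proof (intro allI impI, elim conjE)
    fix vs assume ne: "vs \<noteq> []" and sub: "set vs \<subseteq> set s"
      and ch: "\<forall>k. Suc k < length vs \<longrightarrow> nearw s (vs ! Suc k) (vs ! k)"
    let ?Bs = "map (blk s) vs"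
    have "?Bs \<noteq> []" "set ?Bs \<subseteq> blk s ` set s" using ne sub by auto
    moreover have "\<forall>k. Suc k < length ?Bs \<longrightarrow> nearest_outer (blk s ` set s) (?Bs ! Suc k) (?Bs ! k)"
      using ch nearest_blk[OF pw] sub by (auto simp: subset_iff)
    ultimately have "vseq (map (fsl s) ?Bs)" using vm unfolding vmono_labeling_def by blast
    moreover have "map (fsl s) ?Bs = vs" using fsl_blk[OF pw] sub by (induction vs) auto
    ultimately show "vseq vs" by simp
  qed
next
  assume vc: "VMc s"
  show "vmono_labeling (blk s ` set s) (fsl s)" unfolding vmono_labeling_def
  proof (intro allI impI, elim conjE)
    fix Bs assume ne: "Bs \<noteq> []" and sub: "set Bs \<subseteq> blk s ` set s"
      and ch: "\<forall>k. Suc k < length Bs \<longrightarrow> nearest_outer (blk s ` set s) (Bs ! Suc k) (Bs ! k)"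
    let ?vs = "map (fsl s) Bs"
    have bb: "blk s (fsl s B) = B" "fsl s B \<in> set s" if "B \<in> set Bs" for B
      using that sub fsl_blk[OF pw] by auto
    have Bs: "Bs = map (blk s) ?vs" using bb by (induction Bs) auto
    have "?vs \<noteq> []" "set ?vs \<subseteq> set s" using ne bb by auto
    moreover have "\<forall>k. Suc k < length ?vs \<longrightarrow> nearw s (?vs ! Suc k) (?vs ! k)"
    proof (intro allI impI)
      fix k assume k: "Suc k < length ?vs"
      have m: "Bs ! Suc k \<in> set Bs" "Bs ! k \<in> set Bs" using k by auto
      have "nearest_outer (blk s ` set s) (Bs ! Suc k) (Bs ! k)" using ch k by simp
      then have "nearest_outer (blk s ` set s) (blk s (fsl s (Bs ! Suc k))) (blk s (fsl s (Bs ! k)))"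
        using bb m by simp
      then have "nearw s (fsl s (Bs ! Suc k)) (fsl s (Bs ! k))"
        using nearest_blk[OF pw, of "fsl s (Bs ! Suc k)" "fsl s (Bs ! k)"] bb(2)[OF m(1)] bb(2)[OF m(2)] by simp
      then show "nearw s (?vs ! Suc k) (?vs ! k)" using k by simp
    qed
    ultimately show "vseq (map (fsl s) Bs)" using vc unfolding VMc_def by blast
  qed
qed

lemma noncross_iff:
  assumes pw: "pairw s"
  shows "noncrossing (blk s ` set s) \<longleftrightarrow> NCw s"
proof
  assume nc: "noncrossing (blk s ` set s)"
  show "NCw s" unfolding NCw_def
  proof
    assume "\<exists>a b c d. a < b \<and> b < c \<and> c < d \<and> d < length s \<and> s ! a = s ! c \<and> s ! b = s ! d \<and> s ! a \<noteq> s ! b"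
    then obtain a b c d where h: "a < b" "b < c" "c < d" "d < length s" "s ! a = s ! c" "s ! b = s ! d" "s ! a \<noteq> s ! b"
      by blast
    let ?B = "blk s (s ! a)" and ?B' = "blk s (s ! b)"
    have in1: "?B \<in> blk s ` set s" "?B' \<in> blk s ` set s" using h by auto
    have "Suc b \<in> ?B'" using blk_mem h by simp
    moreover have "Suc b \<notin> ?B" using blk_mem h by simp
    ultimately have "?B \<noteq> ?B'" by blast
    moreover have "Suc a \<in> ?B" "Suc c \<in> ?B" "Suc b \<in> ?B'" "Suc d \<in> ?B'" using blk_mem h by auto
    ultimately show False using nc in1 h unfolding noncrossing_def
      by (metis Suc_mono)
  qed
next
  assume nc: "NCw s"
  show "noncrossing (blk s ` set s)" unfolding noncrossing_def
  proof (intro ballI impI notI)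
    fix B B' assume B: "B \<in> blk s ` set s" and B': "B' \<in> blk s ` set s" and ne: "B \<noteq> B'"
    assume "\<exists>a b c d. a < b \<and> b < c \<and> c < d \<and> a \<in> B \<and> c \<in> B \<and> b \<in> B' \<and> d \<in> B'"
    then obtain a b c d where h: "a < b" "b < c" "c < d" "a \<in> B" "c \<in> B" "b \<in> B'" "d \<in> B'" by blast
    obtain x y where xy: "x \<in> set s" "B = blk s x" "y \<in> set s" "B' = blk s y" using B B' by auto
    have pos: "\<And>t z. t \<in> blk s z \<Longrightarrow> \<exists>q. t = Suc q \<and> q < length s \<and> s ! q = z"
      unfolding blk_def pos_def by auto
    obtain qa qb qc qd where q: "a = Suc qa" "qa < length s" "s ! qa = x"
      "b = Suc qb" "qb < length s" "s ! qb = y" "c = Suc qc" "qc < length s" "s ! qc = x"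
      "d = Suc qd" "qd < length s" "s ! qd = y"
      using pos[of a x] pos[of b y] pos[of c x] pos[of d y] h xy by metis
    have "x \<noteq> y" using ne xy by auto
    then have "qa < qb \<and> qb < qc \<and> qc < qd \<and> qd < length s \<and> s ! qa = s ! qc \<and> s ! qb = s ! qd \<and> s ! qa \<noteq> s ! qb"
      using q h by auto
    then show False using nc unfolding NCw_def by blast
  qed
qed


definition StdP :: "nat \<Rightarrow> nat list set" where
  "StdP k = {s. length s = 2 * k \<and> set s = {1..k} \<and> pairw s}"

definition blkOf :: "nat set set \<Rightarrow> nat \<Rightarrow> nat set" where
  "blkOf \<pi> q = (THE B. B \<in> \<pi> \<and> Suc q \<in> B)"

definition hw :: "nat \<Rightarrow> nat set set \<times> (nat set \<Rightarrow> nat) \<Rightarrow> nat list" where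
  "hw k pf = map (\<lambda>q. snd pf (blkOf (fst pf) q)) [0..<2 * k]"

definition toP :: "nat list \<Rightarrow> nat set set \<times> (nat set \<Rightarrow> nat)" where
  "toP s = (blk s ` set s, fsl s)"

lemma blkOf_unique:
  assumes "partition_on A \<pi>" "B \<in> \<pi>" "Suc q \<in> B"
  shows "blkOf \<pi> q = B"
  unfolding blkOf_def
proof (rule the_equality)
  show "B \<in> \<pi> \<and> Suc q \<in> B" using assms by simp
next
  fix B' assume "B' \<in> \<pi> \<and> Suc q \<in> B'"
  then show "B' = B" using partition_onD2[OF assms(1)] assms(2,3) disjointD by blast
qed

lemma blkOf_ex:
  assumes "partition_on A \<pi>" "Suc q \<in> A"
  shows "blkOf \<pi> q \<in> \<pi> \<and> Suc q \<in> blkOf \<pi> q"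
proof -
  obtain B where "B \<in> \<pi>" "Suc q \<in> B" using partition_onD1[OF assms(1)] assms(2) by blast
  then show ?thesis using blkOf_unique[OF assms(1)] by simp
qed

lemma toP_partition:
  assumes "s \<in> StdP k"
  shows "partition_on {1..2*k} (blk s ` set s)"
proof -
  have pw: "pairw s" and len: "length s = 2 * k" using assms unfolding StdP_def by auto
  have U: "\<Union>(blk s ` set s) = {1..2*k}"
  proof
    show "\<Union>(blk s ` set s) \<subseteq> {1..2*k}" using len unfolding blk_def pos_def by auto
  next
    show "{1..2*k} \<subseteq> \<Union>(blk s ` set s)"
    proof
      fix t assume t: "t \<in> {1..2*k}"
      define q where "q = t - 1"
      have q: "t = Suc q" "q < length s" using t len unfolding q_def by auto
      then have "t \<in> blk s (s ! q)" using blk_mem by simp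
      then show "t \<in> \<Union>(blk s ` set s)" using q by auto
    qed
  qed
  show ?thesis
  proof (rule partition_onI[OF U])
    fix p q assume p: "p \<in> blk s ` set s" and q: "q \<in> blk s ` set s" and ne: "p \<noteq> q"
    then obtain x y where "p = blk s x" "q = blk s y" by auto
    then show "disjnt p q" using ne unfolding disjnt_def by (auto simp: blk_def pos_def)
  next
    show "{} \<notin> blk s ` set s" using blk_eq[OF pw] by auto
  qed
qed

lemma toP_OV2:
  assumes "s \<in> StdP k" "NCw s" "VMw s"
  shows "toP s \<in> OV2 k"
proof -
  have pw: "pairw s" and len: "length s = 2 * k" and st: "set s = {1..k}" using assms unfolding StdP_def by auto
  have c2: "\<forall>B\<in>blk s ` set s. card B = 2"
  proof
    fix B assume "B \<in> blk s ` set s"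
    then obtain x where x: "x \<in> set s" "B = blk s x" by auto
    then have "Suc (fo s x) \<noteq> Suc (lo s x)" using pos2[OF pw x(1)] by simp
    then show "card B = 2" using blk_eq[OF pw x(1)] x(2) by simp
  qed
  have ext: "fsl s \<in> extensional (blk s ` set s)" unfolding fsl_def by simp
  have bij: "bij_betw (fsl s) (blk s ` set s) {1..k}"
    unfolding bij_betw_def
  proof
    show "inj_on (fsl s) (blk s ` set s)" using fsl_blk[OF pw] by (intro inj_onI) auto
    show "fsl s ` blk s ` set s = {1..k}" using fsl_blk[OF pw] st by (force simp: image_image)
  qed
  have "VMc s" using VMw_iff_VMc assms(2,3) pw by blast
  then have vm: "vmono_labeling (blk s ` set s) (fsl s)" using vmono_iff[OF pw] by simp
  have nc: "noncrossing (blk s ` set s)" using noncross_iff[OF pw] assms(2) by simp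
  show ?thesis unfolding OV2_def toP_def using toP_partition[OF assms(1)] c2 nc ext bij vm by simp
qed

lemma hw_toP:
  assumes "s \<in> StdP k"
  shows "hw k (toP s) = s"
proof -
  have pw: "pairw s" and len: "length s = 2 * k" using assms unfolding StdP_def by auto
  show ?thesis
  proof (rule nth_equalityI)
    show "length (hw k (toP s)) = length s" using len by (simp add: hw_def)
  next
    fix q assume q: "q < length (hw k (toP s))"
    then have q': "q < length s" using len by (simp add: hw_def)
    have "blkOf (blk s ` set s) q = blk s (s ! q)"
      using blkOf_unique[OF toP_partition[OF assms]] q' blk_mem by simp
    then show "hw k (toP s) ! q = s ! q" using q q' fsl_blk[OF pw] len
      by (simp add: hw_def toP_def)
  qed
qed

lemma hw_props:
  assumes "pf \<in> OV2 k"
  shows "hw k pf \<in> StdP k \<and> toP (hw k pf) = pf"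
proof -
  obtain \<pi> f where pf: "pf = (\<pi>, f)" by (cases pf)
  have part: "partition_on {1..2*k} \<pi>" and c2: "\<forall>B\<in>\<pi>. card B = 2" and ext: "f \<in> extensional \<pi>"
    and bij: "bij_betw f \<pi> {1..k}" using assms unfolding pf OV2_def by auto
  let ?s = "hw k (\<pi>, f)"
  have len: "length ?s = 2 * k" by (simp add: hw_def)
  have nth: "?s ! q = f (blkOf \<pi> q)" if "q < 2 * k" for q using that by (simp add: hw_def)
  have bo: "blkOf \<pi> q \<in> \<pi> \<and> Suc q \<in> blkOf \<pi> q" if "q < 2 * k" for q
    using blkOf_ex[OF part] that by simp
  have Usub: "B \<subseteq> {1..2*k}" if "B \<in> \<pi>" for B using partition_onD1[OF part] that by blast
  define Bv where "Bv v = inv_into \<pi> f v" for v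
  have Bv: "Bv v \<in> \<pi>" "f (Bv v) = v" if "v \<in> {1..k}" for v
    using bij that unfolding Bv_def by (auto simp: bij_betw_def inv_into_into f_inv_into_f)
  have finj: "inj_on f \<pi>" using bij by (simp add: bij_betw_def)
  have key: "?s ! q = v \<longleftrightarrow> Suc q \<in> Bv v" if "v \<in> {1..k}" "q < 2 * k" for v q
  proof
    assume "?s ! q = v"
    then have "f (blkOf \<pi> q) = f (Bv v)" using nth[OF that(2)] Bv[OF that(1)] by simp
    then have "blkOf \<pi> q = Bv v" using finj bo[OF that(2)] Bv[OF that(1)] by (meson inj_onD)
    then show "Suc q \<in> Bv v" using bo[OF that(2)] by simp
  next
    assume "Suc q \<in> Bv v"
    then have "blkOf \<pi> q = Bv v" using blkOf_unique[OF part Bv(1)[OF that(1)]] by simp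
    then show "?s ! q = v" using nth[OF that(2)] Bv[OF that(1)] by simp
  qed
  have setsub: "set ?s \<subseteq> {1..k}"
  proof
    fix x assume "x \<in> set ?s"
    then obtain q where "q < 2 * k" "x = ?s ! q" using len by (metis in_set_conv_nth)
    then show "x \<in> {1..k}" using nth bo bij by (auto simp: bij_betw_def)
  qed
  have blkv: "blk ?s v = Bv v" if v: "v \<in> {1..k}" for v
  proof
    show "blk ?s v \<subseteq> Bv v" using key[OF v] len unfolding blk_def pos_def by auto
  next
    show "Bv v \<subseteq> blk ?s v"
    proof
      fix t assume t: "t \<in> Bv v"
      then have t2: "t \<in> {1..2*k}" using Usub Bv(1)[OF v] by blast
      define q where "q = t - 1"
      have q: "t = Suc q" "q < 2 * k" using t2 unfolding q_def by auto
      then have "?s ! q = v" using key[OF v] t by simp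
      then show "t \<in> blk ?s v" using q len blk_mem by simp
    qed
  qed
  have setsup: "{1..k} \<subseteq> set ?s"
  proof
    fix v assume v: "v \<in> {1..k}"
    have "Bv v \<noteq> {}" using partition_onD3[OF part] Bv(1)[OF v] by auto
    then obtain t where t: "t \<in> Bv v" by auto
    then have "t \<in> blk ?s v" using blkv[OF v] by simp
    then show "v \<in> set ?s" unfolding blk_def pos_def by auto
  qed
  have st: "set ?s = {1..k}" using setsub setsup by blast
  have pw: "pairw ?s" unfolding pairw_def
  proof
    fix v assume v: "v \<in> set ?s"
    then have v': "v \<in> {1..k}" using st by simp
    have "count_list ?s v = card (pos ?s v)" by (simp add: card_pos)
    also have "\<dots> = card (blk ?s v)" unfolding blk_def by (simp add: card_image)
    also have "\<dots> = 2" using blkv[OF v'] c2 Bv(1)[OF v'] by simp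
    finally show "count_list ?s v = 2" .
  qed
  have S: "?s \<in> StdP k" using len st pw unfolding StdP_def by simp
  have P1: "blk ?s ` set ?s = \<pi>"
  proof
    show "blk ?s ` set ?s \<subseteq> \<pi>" using st blkv Bv by auto
  next
    show "\<pi> \<subseteq> blk ?s ` set ?s"
    proof
      fix B assume B: "B \<in> \<pi>"
      have fB: "f B \<in> {1..k}" using bij B by (auto simp: bij_betw_def)
      have "Bv (f B) = B" unfolding Bv_def using finj B by simp
      then show "B \<in> blk ?s ` set ?s" using blkv[OF fB] st fB by force
    qed
  qed
  have P2: "fsl ?s = f"
  proof (rule extensionalityI[where A = \<pi>])
    show "fsl ?s \<in> extensional \<pi>" unfolding fsl_def P1 by simp
    show "f \<in> extensional \<pi>" by (rule ext)
  next
    fix B assume B: "B \<in> \<pi>"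
    have fin: "finite B" "B \<noteq> {}" using c2 B by (auto intro: card_ge_0_finite)
    then have mB: "Min B \<in> B" by simp
    then have "Min B \<in> {1..2*k}" using Usub B by blast
    then have mq: "Min B = Suc (Min B - 1)" "Min B - 1 < 2 * k" by auto
    then have "blkOf \<pi> (Min B - 1) = B" using blkOf_unique[OF part B] mB by simp
    then show "fsl ?s B = f B" unfolding fsl_def P1 using B nth[OF mq(2)] by simp
  qed
  show ?thesis using S P1 P2 unfolding pf toP_def by simp
qed

lemma card_OV2: "card {s \<in> StdP k. NCw s \<and> VMw s} = card (OV2 k)"
proof (rule bij_betw_same_card[of toP])
  show "bij_betw toP {s \<in> StdP k. NCw s \<and> VMw s} (OV2 k)"
  proof (rule bij_betw_byWitness[where f' = "hw k"])
    show "\<forall>s\<in>{s \<in> StdP k. NCw s \<and> VMw s}. hw k (toP s) = s" using hw_toP by blast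
    show "\<forall>pf\<in>OV2 k. toP (hw k pf) = pf" using hw_props by blast
    show "toP ` {s \<in> StdP k. NCw s \<and> VMw s} \<subseteq> OV2 k" using toP_OV2 by blast
    show "hw k ` OV2 k \<subseteq> {s \<in> StdP k. NCw s \<and> VMw s}"
    proof
      fix s assume "s \<in> hw k ` OV2 k"
      then obtain pf where pf: "pf \<in> OV2 k" "s = hw k pf" by blast
      have S: "s \<in> StdP k" and T: "toP s = pf" using hw_props[OF pf(1)] pf(2) by auto
      have pw: "pairw s" using S unfolding StdP_def by simp
      have "noncrossing (blk s ` set s)" "vmono_labeling (blk s ` set s) (fsl s)"
        using pf(1) T unfolding OV2_def toP_def by auto
      then have "NCw s" "VMc s" using noncross_iff[OF pw] vmono_iff[OF pw] by auto
      then show "s \<in> {s \<in> StdP k. NCw s \<and> VMw s}" using S VMw_iff_VMc pw by blast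
    qed
  qed
qed


definition rk :: "nat set \<Rightarrow> nat \<Rightarrow> nat" where "rk T x = card {y \<in> T. y \<le> x}"
definition en :: "nat set \<Rightarrow> nat \<Rightarrow> nat" where "en T = inv_into T (rk T)"
definition std :: "nat list \<Rightarrow> nat list" where "std w = map (rk (set w)) w"

lemma rk_mono: assumes "finite T" shows "strict_mono_on T (rk T)"
proof (rule strict_mono_onI)
  fix r s assume rs: "r \<in> T" "s \<in> T" "r < s"
  have "s \<in> {y \<in> T. y \<le> s}" "s \<notin> {y \<in> T. y \<le> r}" using rs by auto
  moreover have "{y \<in> T. y \<le> r} \<subseteq> {y \<in> T. y \<le> s}" using rs by auto
  ultimately have "{y \<in> T. y \<le> r} \<subset> {y \<in> T. y \<le> s}" by blast
  then show "rk T r < rk T s" unfolding rk_def using assms by (intro psubset_card_mono) auto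
qed

lemma rk_inj: "finite T \<Longrightarrow> inj_on (rk T) T"
  using rk_mono strict_mono_on_imp_inj_on by blast

lemma rk_image: assumes "finite T" shows "rk T ` T = {1..card T}"
proof -
  have sub: "rk T ` T \<subseteq> {1..card T}"
  proof
    fix r assume "r \<in> rk T ` T"
    then obtain x where x: "x \<in> T" "r = rk T x" by auto
    have "x \<in> {y \<in> T. y \<le> x}" using x by simp
    then have "1 \<le> r" using x assms unfolding rk_def by (metis (no_types, lifting) One_nat_def Suc_leI card_gt_0_iff empty_iff finite_subset mem_Collect_eq subsetI)
    moreover have "r \<le> card T" using x assms unfolding rk_def by (simp add: card_mono)
    ultimately show "r \<in> {1..card T}" by simp
  qed
  have "card (rk T ` T) = card {1..card T}" using card_image[OF rk_inj[OF assms]] by simp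
  then show ?thesis using sub by (intro card_subset_eq) auto
qed

lemma en_rk: "finite T \<Longrightarrow> x \<in> T \<Longrightarrow> en T (rk T x) = x"
  unfolding en_def using rk_inj by (simp add: inv_into_f_f)

lemma rk_en: assumes "finite T" "r \<in> {1..card T}" shows "en T r \<in> T" "rk T (en T r) = r"
proof -
  have r: "r \<in> rk T ` T" using rk_image[OF assms(1)] assms(2) by simp
  show "en T r \<in> T" unfolding en_def using r by (rule inv_into_into)
  show "rk T (en T r) = r" unfolding en_def using r by (rule f_inv_into_f)
qed

lemma en_image: assumes "finite T" shows "en T ` {1..card T} = T"
proof
  show "en T ` {1..card T} \<subseteq> T" using rk_en[OF assms] by auto
  show "T \<subseteq> en T ` {1..card T}"
  proof
    fix x assume x: "x \<in> T"
    then have "rk T x \<in> {1..card T}" using rk_image[OF assms] by auto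
    then show "x \<in> en T ` {1..card T}" using en_rk[OF assms x] by force
  qed
qed

lemma en_mono: assumes "finite T" shows "strict_mono_on {1..card T} (en T)"
proof (rule strict_mono_onI)
  fix r s assume rs: "r \<in> {1..card T}" "s \<in> {1..card T}" "r < s"
  show "en T r < en T s"
  proof (rule ccontr)
    assume "\<not> en T r < en T s"
    then have "en T s \<le> en T r" by simp
    then have "rk T (en T s) \<le> rk T (en T r)"
      using strict_mono_on_less_eq[OF rk_mono[OF assms]] rk_en[OF assms] rs by blast
    then show False using rk_en[OF assms] rs by simp
  qed
qed

lemma std_props:
  shows "length (std w) = length w" "set (std w) = {1..card (set w)}" "map (en (set w)) (std w) = w"
proof -
  show "length (std w) = length w" by (simp add: std_def)
  show "set (std w) = {1..card (set w)}" using rk_image[of "set w"] by (simp add: std_def)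
  have "map (en (set w)) (std w) = map (\<lambda>x. en (set w) (rk (set w) x)) w" by (simp add: std_def)
  also have "\<dots> = map id w" using en_rk[of "set w"] by (intro map_cong) auto
  finally show "map (en (set w)) (std w) = w" by simp
qed

lemma std_bound: "set (std w) \<subseteq> {1..length w}"
  using std_props(2)[of w] card_length[of w] by auto

lemma pairw_map_inj: assumes "inj_on f (set s)" shows "pairw (map f s) \<longleftrightarrow> pairw s"
  unfolding pairw_def using count_list_inj_map[OF assms] by auto

lemma pairw_len: assumes "pairw w" shows "length w = 2 * card (set w)"
proof -
  have "length w = sum (count_list w) (set w)" using sum_count_set[of w "set w"] by simp
  also have "\<dots> = sum (\<lambda>_. 2) (set w)" using assms unfolding pairw_def by simp
  finally show ?thesis by simp
qed

lemma nonpair_len: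
  assumes "\<not> pairw w" "\<forall>x\<in>set w. count_list w x \<noteq> 1"
  shows "2 * card (set w) < length w"
proof -
  have ge: "count_list w x \<ge> 2" if "x \<in> set w" for x
    using assms(2) that count_list_0_iff[of w x] by fastforce
  obtain y where y: "y \<in> set w" "count_list w y \<noteq> 2" using assms(1) unfolding pairw_def by blast
  have "sum (\<lambda>_. 2) (set w) < sum (count_list w) (set w)"
    using ge y by (intro sum_strict_mono_ex1) (auto intro!: bexI[of _ y] le_neq_implies_less)
  also have "\<dots> = length w" using sum_count_set[of w "set w"] by simp
  finally show ?thesis by simp
qed

definition Wn :: "nat \<Rightarrow> nat \<Rightarrow> nat list set" where
  "Wn n N = {w. set w \<subseteq> {1..N} \<and> length w = n}"

lemma finite_Wn: "finite (Wn n N)" unfolding Wn_def by (rule finite_lists_length_eq) simp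

lemma finite_StdP: "finite (StdP k)"
proof -
  have "StdP k \<subseteq> {s. set s \<subseteq> {1..k} \<and> length s = 2 * k}" unfolding StdP_def by auto
  then show ?thesis using finite_lists_length_eq[of "{1..k}" "2 * k"] finite_subset by blast
qed

lemma pow_sum_lists:
  fixes a :: "nat \<Rightarrow> 'b::ring_1"
  assumes "finite A"
  shows "(\<Sum>i\<in>A. a i) ^ n = (\<Sum>w\<in>{w. set w \<subseteq> A \<and> length w = n}. prod_list (map a w))"
proof (induction n)
  case 0
  have "{w. set w \<subseteq> A \<and> length w = 0} = {[]}" by auto
  then show ?case by simp
next
  case (Suc n)
  let ?L = "\<lambda>n. {w. set w \<subseteq> A \<and> length w = n}"
  have bij: "bij_betw (\<lambda>(i, w). i # w) (A \<times> ?L n) (?L (Suc n))"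
  proof (rule bij_betw_byWitness[where f' = "\<lambda>w. (hd w, tl w)"])
    show "\<forall>x\<in>A \<times> ?L n. (\<lambda>w. (hd w, tl w)) ((\<lambda>(i, w). i # w) x) = x" by auto
    show "\<forall>y\<in>?L (Suc n). (\<lambda>(i, w). i # w) (hd y, tl y) = y" by (auto simp: length_Suc_conv)
    show "(\<lambda>(i, w). i # w) ` (A \<times> ?L n) \<subseteq> ?L (Suc n)" by auto
    show "(\<lambda>w. (hd w, tl w)) ` ?L (Suc n) \<subseteq> A \<times> ?L n" by (auto simp: length_Suc_conv)
  qed
  have "(\<Sum>i\<in>A. a i) ^ Suc n = (\<Sum>i\<in>A. a i) * (\<Sum>w\<in>?L n. prod_list (map a w))"
    using Suc by simp
  also have "\<dots> = (\<Sum>i\<in>A. \<Sum>w\<in>?L n. a i * prod_list (map a w))"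
    by (simp add: sum_distrib_left sum_distrib_right sum.swap[of _ A])
  also have "\<dots> = (\<Sum>(i, w)\<in>A \<times> ?L n. prod_list (map a (i # w)))"
    by (simp add: sum.cartesian_product)
  also have "\<dots> = (\<Sum>w\<in>?L (Suc n). prod_list (map a w))"
    using sum.reindex_bij_betw[OF bij, of "\<lambda>w. prod_list (map a w)"] by (simp add: split_beta)
  finally show ?case .
qed

lemma card_small_sets:
  assumes "1 \<le> N"
  shows "card {T. T \<subseteq> {1..N} \<and> card T \<le> d} \<le> Suc d * N ^ d"
proof -
  have "{T. T \<subseteq> {1..N} \<and> card T \<le> d} = (\<Union>j\<in>{..d}. {T. T \<subseteq> {1..N} \<and> card T = j})" by auto
  then have "card {T. T \<subseteq> {1..N} \<and> card T \<le> d} \<le> (\<Sum>j\<in>{..d}. card {T. T \<subseteq> {1..N} \<and> card T = j})"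
    using card_UN_le[OF finite_atMost[of d], of "\<lambda>j. {T. T \<subseteq> {1..N} \<and> card T = j}"] by simp
  also have "\<dots> = (\<Sum>j\<in>{..d}. N choose j)" using n_subsets[of "{1..N}"] by simp
  also have "\<dots> \<le> (\<Sum>j\<in>{..d}. N ^ d)"
  proof (rule sum_mono)
    fix j assume "j \<in> {..d}"
    then have "N ^ j \<le> N ^ d" using assms by (intro power_increasing) auto
    moreover have "N choose j \<le> N ^ j"
      by (cases "j \<le> N") (simp_all add: binomial_le_pow binomial_eq_0)
    ultimately show "N choose j \<le> N ^ d" by linarith
  qed
  finally show ?thesis by simp
qed

lemma card_small_words:
  assumes "1 \<le> N"
  shows "card {w \<in> Wn n N. card (set w) \<le> d} \<le> Suc d * N ^ d * d ^ n"
proof -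
  let ?S = "{T. T \<subseteq> {1..N} \<and> card T \<le> d}"
  have fS: "finite ?S" by (rule finite_subset[of _ "Pow {1..N}"]) auto
  have "{w \<in> Wn n N. card (set w) \<le> d} \<subseteq> (\<Union>T\<in>?S. {w. set w \<subseteq> T \<and> length w = n})"
    unfolding Wn_def by auto
  then have "card {w \<in> Wn n N. card (set w) \<le> d} \<le> card (\<Union>T\<in>?S. {w. set w \<subseteq> T \<and> length w = n})"
    by (intro card_mono) (auto intro!: finite_lists_length_eq fS finite_subset[of _ "{1..N}"])
  also have "\<dots> \<le> (\<Sum>T\<in>?S. card {w. set w \<subseteq> T \<and> length w = n})" by (rule card_UN_le[OF fS])
  also have "\<dots> = (\<Sum>T\<in>?S. card T ^ n)"
    by (intro sum.cong refl card_lists_length_eq) (auto intro: finite_subset[of _ "{1..N}"] simp: finite_subset)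
  also have "\<dots> \<le> (\<Sum>T\<in>?S. d ^ n)" by (intro sum_mono power_mono) auto
  also have "\<dots> = card ?S * d ^ n" by simp
  also have "\<dots> \<le> Suc d * N ^ d * d ^ n" using card_small_sets[OF assms, of d] by (intro mult_right_mono) auto
  finally show ?thesis .
qed

context vsetup begin

lemma M_std: assumes "set w \<subseteq> {1..}" shows "M w = M (std w)"
proof -
  let ?T = "set w"
  have f: "finite ?T" by simp
  have s1: "set (std w) \<subseteq> {1..}" using std_props(2)[of w] by auto
  have s2: "strict_mono_on (set (std w)) (en ?T)" using en_mono[OF f] std_props(2)[of w] by simp
  have s3: "en ?T ` set (std w) \<subseteq> {1..}" using en_image[OF f] std_props(2)[of w] assms by simp
  have "M (map (en ?T) (std w)) = M (std w)" by (rule M_inv[OF s1 s2 s3])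
  then show ?thesis using std_props(3)[of w] by simp
qed

definition Cb :: "nat \<Rightarrow> real" where "Cb n = (\<Sum>s\<in>Wn n n. norm (M s))"

lemma M_bound: assumes "w \<in> Wn n N" shows "norm (M w) \<le> Cb n"
proof -
  have sw: "set w \<subseteq> {1..}" "length w = n" using assms unfolding Wn_def by auto
  have "std w \<in> Wn n n" using std_bound[of w] std_props(1)[of w] sw unfolding Wn_def by simp
  then have "norm (M (std w)) \<le> Cb n" unfolding Cb_def
    by (rule member_le_sum[where f = "\<lambda>s. norm (M s)"]) (auto simp: finite_Wn)
  then show ?thesis using M_std[OF sw(1)] by simp
qed

lemma nonpair_bound:
  assumes "1 \<le> N" "1 \<le> n"
  shows "norm (\<Sum>w\<in>Wn n N - {w. pairw w}. M w) \<le> Cb n * (Suc ((n - 1) div 2) * N ^ ((n - 1) div 2) * ((n - 1) div 2) ^ n)"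
proof -
  let ?d = "(n - 1) div 2"
  let ?A = "Wn n N - {w. pairw w}" and ?B = "{w \<in> Wn n N. card (set w) \<le> ?d}"
  have z: "M w = 0" if "w \<in> ?A" "w \<notin> ?B" for w
  proof -
    have sw: "set w \<subseteq> {1..}" "length w = n" using that unfolding Wn_def by auto
    show ?thesis
    proof (cases "\<exists>x\<in>set w. count_list w x = 1")
      case True then show ?thesis using M_single[OF sw(1)] by blast
    next
      case False
      then have "2 * card (set w) < n" using nonpair_len[of w] that sw by simp
      then have "card (set w) \<le> ?d" by simp
      then show ?thesis using that by simp
    qed
  qed
  have "norm (\<Sum>w\<in>?A. M w) \<le> (\<Sum>w\<in>?A. norm (M w))" by (rule norm_sum)
  also have "\<dots> = (\<Sum>w\<in>?A \<inter> ?B. norm (M w))"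
    using z by (intro sum.mono_neutral_right) (auto simp: finite_Wn)
  also have "\<dots> \<le> (\<Sum>w\<in>?B. norm (M w))"
    by (rule sum_mono2) (auto simp: finite_Wn)
  also have "\<dots> \<le> (\<Sum>w\<in>?B. Cb n)" using M_bound by (intro sum_mono) auto
  also have "\<dots> = Cb n * card ?B" by simp
  also have "\<dots> \<le> Cb n * (Suc ?d * N ^ ?d * ?d ^ n)"
  proof (rule mult_left_mono)
    show "real (card ?B) \<le> real (Suc ?d * N ^ ?d * ?d ^ n)" using card_small_words[OF assms(1)] by (simp only: of_nat_le_iff)
    show "0 \<le> Cb n" unfolding Cb_def by (simp add: sum_nonneg)
  qed
  finally show ?thesis by simp
qed

lemma pair_empty_odd: "odd n \<Longrightarrow> Wn n N \<inter> {w. pairw w} = {}"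
  unfolding Wn_def using pairw_len by fastforce

lemma pair_sum:
  "(\<Sum>w\<in>Wn (2 * k) N \<inter> {w. pairw w}. M w) = of_nat (N choose k) * of_nat (card (OV2 k))"
proof -
  let ?Ts = "{T. T \<subseteq> {1..N} \<and> card T = k}"
  let ?D = "?Ts \<times> StdP k"
  let ?Pr = "Wn (2 * k) N \<inter> {w. pairw w}"
  let ?F = "\<lambda>(T, s). map (en T) s"
  have finT: "finite T" if "T \<in> ?Ts" for T using that finite_subset by blast
  have bij: "bij_betw ?F ?D ?Pr"
  proof (rule bij_betw_byWitness[where f' = "\<lambda>w. (set w, std w)"])
    show "\<forall>x\<in>?D. (\<lambda>w. (set w, std w)) (?F x) = x"
    proof
      fix x assume x: "x \<in> ?D"
      then obtain T s where ts: "x = (T, s)" "T \<in> ?Ts" "s \<in> StdP k" by auto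
      have ss: "set s = {1..card T}" using ts unfolding StdP_def by simp
      have e1: "set (map (en T) s) = T" using en_image[OF finT[OF ts(2)]] ss by simp
      have "std (map (en T) s) = map (\<lambda>r. rk T (en T r)) s" unfolding std_def e1 by simp
      also have "\<dots> = map id s" using rk_en(2)[OF finT[OF ts(2)]] ss by (intro map_cong) auto
      finally show "(\<lambda>w. (set w, std w)) (?F x) = x" using ts e1 by simp
    qed
    show "\<forall>y\<in>?Pr. ?F (set y, std y) = y" using std_props(3) by auto
    show "?F ` ?D \<subseteq> ?Pr"
    proof
      fix w assume "w \<in> ?F ` ?D"
      then obtain T s where ts: "w = map (en T) s" "T \<in> ?Ts" "s \<in> StdP k" by auto
      have ss: "set s = {1..card T}" "length s = 2 * k" "pairw s" using ts unfolding StdP_def by auto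
      have e1: "set w = T" using en_image[OF finT[OF ts(2)]] ss ts(1) by simp
      have "inj_on (en T) (set s)" using strict_mono_on_imp_inj_on[OF en_mono[OF finT[OF ts(2)]]] ss by simp
      then have "pairw w" using pairw_map_inj ss ts(1) by simp
      then show "w \<in> ?Pr" using e1 ts ss unfolding Wn_def by simp
    qed
    show "(\<lambda>w. (set w, std w)) ` ?Pr \<subseteq> ?D"
    proof
      fix x assume "x \<in> (\<lambda>w. (set w, std w)) ` ?Pr"
      then obtain w where w: "x = (set w, std w)" "w \<in> ?Pr" by auto
      have wl: "length w = 2 * k" "set w \<subseteq> {1..N}" "pairw w" using w unfolding Wn_def by auto
      have ck: "card (set w) = k" using pairw_len[OF wl(3)] wl(1) by simp
      have "inj_on (rk (set w)) (set w)" using rk_inj by simp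
      then have "pairw (std w)" using pairw_map_inj wl(3) unfolding std_def by simp
      then have "std w \<in> StdP k" using std_props(1,2)[of w] wl ck unfolding StdP_def by simp
      then show "x \<in> ?D" using w wl ck by simp
    qed
  qed
  have Minv: "M (?F x) = M (snd x)" if xD: "x \<in> ?D" for x
  proof -
    obtain T s where ts: "x = (T, s)" "T \<in> ?Ts" "s \<in> StdP k" using xD by auto
    have ss: "set s = {1..card T}" using ts unfolding StdP_def by simp
    have "M (map (en T) s) = M s"
    proof (rule M_inv)
      show "set s \<subseteq> {1..}" using ss by auto
      show "strict_mono_on (set s) (en T)" using en_mono[OF finT[OF ts(2)]] ss by simp
      show "en T ` set s \<subseteq> {1..}" using en_image[OF finT[OF ts(2)]] ss ts(2) by auto
    qed
    then show ?thesis using ts by simp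
  qed
  have "(\<Sum>w\<in>?Pr. M w) = (\<Sum>x\<in>?D. M (?F x))"
    using sum.reindex_bij_betw[OF bij, of M] by simp
  also have "\<dots> = (\<Sum>x\<in>?D. M (snd x))" using Minv by (rule sum.cong[OF refl])
  also have "\<dots> = (\<Sum>T\<in>?Ts. \<Sum>s\<in>StdP k. M s)"
    unfolding sum.cartesian_product by (rule sum.cong) (auto simp: case_prod_beta)
  also have "\<dots> = of_nat (card ?Ts) * (\<Sum>s\<in>StdP k. M s)" by simp
  also have "card ?Ts = N choose k" using n_subsets[of "{1..N}" k] by simp
  also have "(\<Sum>s\<in>StdP k. M s) = (\<Sum>s\<in>StdP k. if NCw s \<and> VMw s then 1 else 0)"
  proof (rule sum.cong[OF refl])
    fix s assume s: "s \<in> StdP k"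
    then have "set s \<subseteq> {1..}" "pairw s" unfolding StdP_def by auto
    then show "M s = (if NCw s \<and> VMw s then 1 else 0)" using M_pair by blast
  qed
  also have "\<dots> = of_nat (card {s \<in> StdP k. NCw s \<and> VMw s})"
    using finite_StdP[of k] by (simp add: sum.If_cases Int_def)
  also have "card {s \<in> StdP k. NCw s \<and> VMw s} = card (OV2 k)" by (rule card_OV2)
  finally show ?thesis .
qed

end


lemma scaleR_power': "(scaleR c (x::'a::real_normed_algebra_1)) ^ n = scaleR (c ^ n) (x ^ n)"
  by (induction n) (simp_all add: scaleR_scaleR)

lemma lim_inv_sqrt: "(\<lambda>N. B / sqrt (real N)) \<longlonglongrightarrow> 0"
proof -
  have "filterlim (\<lambda>N. sqrt (real N)) at_top sequentially"
    by (rule filterlim_compose[OF sqrt_at_top filterlim_real_sequentially])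
  then show ?thesis
    by (intro tendsto_divide_0[OF tendsto_const] filterlim_at_top_imp_at_infinity)
qed

lemma binom_ratio: "(\<lambda>N. real (N choose k) / real N ^ k) \<longlonglongrightarrow> 1 / fact k"
proof -
  have e: "real (N choose k) / real N ^ k = (\<Prod>i\<in>{0..<k}. 1 - real i / real N) / fact k" if N: "N \<ge> 1" for N
  proof -
    have "real (N choose k) = (\<Prod>i\<in>{0..<k}. real N - real i) / fact k"
      using gbinomial_mult_fact'[of "real N" k] by (simp add: binomial_gbinomial field_simps)
    moreover have "(\<Prod>i\<in>{0..<k}. real N - real i) / real N ^ k = (\<Prod>i\<in>{0..<k}. 1 - real i / real N)"
    proof -
      have "(\<Prod>i\<in>{0..<k}. 1 - real i / real N) = (\<Prod>i\<in>{0..<k}. (real N - real i) / real N)"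
        using N by (intro prod.cong refl) (simp add: field_simps)
      also have "\<dots> = (\<Prod>i\<in>{0..<k}. real N - real i) / real N ^ k" by (simp add: prod_dividef)
      finally show ?thesis by simp
    qed
    ultimately show ?thesis by (metis divide_divide_eq_left mult.commute)
  qed
  have "(\<lambda>N. (\<Prod>i\<in>{0..<k}. 1 - real i / real N) / fact k) \<longlonglongrightarrow> (\<Prod>i\<in>{0..<k}. 1 - 0) / fact k"
    by (intro tendsto_intros) auto
  then have "(\<lambda>N. (\<Prod>i\<in>{0..<k}. 1 - real i / real N) / fact k) \<longlonglongrightarrow> 1 / fact k" by simp
  then show ?thesis
    by (rule Lim_transform_eventually) (use e in \<open>auto simp: eventually_sequentially intro!: exI[of _ 1]\<close>)
qed

context vsetup begin

lemma phi_SN: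
  "\<phi> ((scaleR (1 / sqrt (real N)) (\<Sum>i\<in>{1..N}. a i)) ^ n) =
   complex_of_real ((1 / sqrt (real N)) ^ n) *
     ((\<Sum>w\<in>Wn n N \<inter> {w. pairw w}. M w) + (\<Sum>w\<in>Wn n N - {w. pairw w}. M w))"
proof -
  have "(\<Sum>i\<in>{1..N}. a i) ^ n = (\<Sum>w\<in>Wn n N. prod_list (map a w))"
    unfolding Wn_def by (rule pow_sum_lists) simp
  then have "\<phi> ((\<Sum>i\<in>{1..N}. a i) ^ n) = (\<Sum>w\<in>Wn n N. M w)" by (simp add: phi_sum M_def)
  also have "\<dots> = (\<Sum>w\<in>Wn n N \<inter> {w. pairw w}. M w) + (\<Sum>w\<in>Wn n N - {w. pairw w}. M w)"
    by (rule sum.Int_Diff[OF finite_Wn])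
  finally show ?thesis by (simp add: scaleR_power' phi_scaleR)
qed

theorem main_limit:
  "(\<lambda>N. \<phi> ((scaleR (1 / sqrt (real N)) (\<Sum>i\<in>{1..N}. a i)) ^ n))
    \<longlonglongrightarrow> (if even n then of_nat (card (OV2 (n div 2))) / of_nat (fact (n div 2)) else 0)"
proof -
  let ?c = "\<lambda>N. complex_of_real ((1 / sqrt (real N)) ^ n)"
  let ?P = "\<lambda>N. \<Sum>w\<in>Wn n N \<inter> {w. pairw w}. M w"
  let ?R = "\<lambda>N. \<Sum>w\<in>Wn n N - {w. pairw w}. M w"
  let ?d = "(n - 1) div 2"
  let ?K = "card (OV2 (n div 2))"
  have R0: "(\<lambda>N. ?c N * ?R N) \<longlonglongrightarrow> 0"
  proof (cases "n = 0")
    case True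
    have "Wn n N - {w. pairw w} = {}" for N using True unfolding Wn_def pairw_def by auto
    then have "?R N = 0" for N by (simp only: sum.empty)
    then show ?thesis by simp
  next
    case False
    let ?B = "Cb n * (Suc ?d * ?d ^ n)"
    have "eventually (\<lambda>N. norm (?c N * ?R N) \<le> ?B / sqrt (real N)) sequentially"
      unfolding eventually_sequentially
    proof (intro exI[of _ 1] allI impI)
      fix N :: nat assume N: "1 \<le> N"
      have sN: "1 \<le> sqrt (real N)" using N by simp
      have nb: "norm (?R N) \<le> ?B * real N ^ ?d"
        using nonpair_bound[OF N] False by (simp add: algebra_simps)
      have Bnn: "0 \<le> ?B" unfolding Cb_def by (simp add: sum_nonneg)
      have cn: "norm (?c N) = (1 / sqrt (real N)) ^ n" by (simp only: norm_of_real) simp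
      have "norm (?c N * ?R N) = (1 / sqrt (real N)) ^ n * norm (?R N)"
        by (simp only: norm_mult cn)
      also have "\<dots> \<le> (1 / sqrt (real N)) ^ n * (?B * real N ^ ?d)"
        by (rule mult_left_mono[OF nb]) simp
      also have "real N ^ ?d = sqrt (real N) ^ (2 * ?d)"
        by (simp add: power_mult)
      also have "(1 / sqrt (real N)) ^ n * (?B * sqrt (real N) ^ (2 * ?d)) = ?B / sqrt (real N) ^ (n - 2 * ?d)"
      proof -
        have n2: "n = (n - 2 * ?d) + 2 * ?d" using False by simp
        have "sqrt (real N) ^ n = sqrt (real N) ^ ((n - 2 * ?d) + 2 * ?d)" using n2 by simp
        also have "\<dots> = sqrt (real N) ^ (n - 2 * ?d) * sqrt (real N) ^ (2 * ?d)" by (rule power_add)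
        finally have "sqrt (real N) ^ n = sqrt (real N) ^ (n - 2 * ?d) * sqrt (real N) ^ (2 * ?d)" .
        then show ?thesis using sN by (simp add: field_simps power_one_over)
      qed
      also have "\<dots> \<le> ?B / sqrt (real N)"
      proof (rule divide_left_mono[OF _ Bnn])
        have "1 \<le> n - 2 * ?d" using False by simp
        then have "sqrt (real N) ^ 1 \<le> sqrt (real N) ^ (n - 2 * ?d)" by (rule power_increasing[OF _ sN])
        then show "sqrt (real N) \<le> sqrt (real N) ^ (n - 2 * ?d)" by simp
        show "0 < sqrt (real N) ^ (n - 2 * ?d) * sqrt (real N)" using sN by simp
      qed
      finally show "norm (?c N * ?R N) \<le> ?B / sqrt (real N)" .
    qed
    then show ?thesis by (rule Lim_null_comparison) (rule lim_inv_sqrt)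
  qed
  have P0: "(\<lambda>N. ?c N * ?P N) \<longlonglongrightarrow> (if even n then of_nat ?K / of_nat (fact (n div 2)) else 0)"
  proof (cases "even n")
    case False
    then show ?thesis using pair_empty_odd by simp
  next
    case True
    then obtain k where k: "n = 2 * k" by blast
    have kk: "n div 2 = k" using k by simp
    have e: "?c N * ?P N = of_nat ?K * complex_of_real (real (N choose k) / real N ^ k)" if N: "N \<ge> 1" for N
    proof -
      have "?P N = of_nat (N choose k) * of_nat ?K" using pair_sum[of k N] k kk by simp
      moreover have "(1 / sqrt (real N)) ^ n = 1 / real N ^ k"
        using k by (simp add: power_mult power_one_over)
      ultimately show ?thesis by (simp add: field_simps)
    qed
    have "(\<lambda>N. of_nat ?K * complex_of_real (real (N choose k) / real N ^ k)) \<longlonglongrightarrow>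
          of_nat ?K * complex_of_real (1 / fact k)"
      by (intro tendsto_intros binom_ratio)
    then have "(\<lambda>N. ?c N * ?P N) \<longlonglongrightarrow> of_nat ?K * complex_of_real (1 / fact k)"
      by (rule Lim_transform_eventually) (use e in \<open>auto simp: eventually_sequentially intro!: exI[of _ 1]\<close>)
    moreover have "of_nat ?K * complex_of_real (1 / fact k) = of_nat ?K / of_nat (fact k)"
      by (simp add: field_simps)
    ultimately show ?thesis using True kk by simp
  qed
  have eq: "(\<lambda>N. \<phi> ((scaleR (1 / sqrt (real N)) (\<Sum>i\<in>{1..N}. a i)) ^ n)) = (\<lambda>N. ?c N * ?P N + ?c N * ?R N)"
    by (rule ext) (simp only: phi_SN distrib_left)
  have "(\<lambda>N. ?c N * ?P N + ?c N * ?R N) \<longlonglongrightarrow> (if even n then of_nat ?K / of_nat (fact (n div 2)) else 0) + 0"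
    by (rule tendsto_add[OF P0 R0])
  then show ?thesis unfolding eq by (simp only: add_0_right)
qed

end

theorem mainTheorem1:
  fixes smul :: "complex \<Rightarrow> 'a::{real_normed_algebra_1,banach} \<Rightarrow> 'a"
    and star :: "'a \<Rightarrow> 'a"
    and \<phi> :: "'a \<Rightarrow> complex"
    and a u :: "nat \<Rightarrow> 'a"
    and n :: nat
  assumes "cstar_prob_space smul star \<phi>"
    and "vmono_indep \<phi> {1..} (\<lambda>i. gen_alg smul {a i, u i}) u"
    and "\<forall>i\<ge>1. \<forall>j\<ge>1. \<forall>k::nat. \<phi> (a i ^ k) = \<phi> (a j ^ k)"
    and "\<forall>i\<ge>1. \<phi> (a i) = 0 \<and> \<phi> (a i ^ 2) = 1"
  shows "(\<lambda>N. \<phi> ((scaleR (1 / sqrt (real N)) (\<Sum>i\<in>{1..N}. a i)) ^ n))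
    \<longlonglongrightarrow> (if even n then of_nat (card (OV2 (n div 2))) / of_nat (fact (n div 2)) else 0)"
proof -
  interpret vsetup smul star \<phi> a u by (unfold_locales) (rule assms)+
  show ?thesis by (rule main_limit)
qed


end
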